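(* Let $n\ge2$ and $s\le\frac n2-1$. Then for every real $b<\frac12$ there is no constant $C$ such that $$\|f\bar gh\|_{X^{s,-b}}\le C\|f\|_{X^{s,b}}\|g\|_{X^{s,b}}\|h\|_{X^{s,b}}$$ holds for all $f,g,h\in X^{s,b}(\mathbb{R}^{n+1})$.
   Context: For $u$ on $\mathbb{R}^n\times\mathbb{R}$ with space-time Fourier transform $\widehat u(\xi,\tau)$: $\|u\|_{X^{s,b}}^2=\int_{\mathbb{R}^{n+1}}(1+|\xi|)^{2s}(1+|\tau+|\xi|^2|)^{2b}|\widehat u(\xi,\tau)|^2d\xi d\tau$. $\bar g$ denotes complex conjugation. *)

theory Defs
  imports "HOL-Analysis.Analysis"
begin

text \<open>Space-time Fourier transform on R^n x R (n = CARD('n)):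
  hat u (xi, tau) = integral of exp(-i (x . xi + t tau)) u(x,t) d(x,t).
  Normalisation constants are irrelevant for the (non-)existence of C.\<close>
definition st_fourier :: "((real^'n) \<times> real \<Rightarrow> complex) \<Rightarrow> (real^'n) \<times> real \<Rightarrow> complex" where
  "st_fourier u = (\<lambda>(\<xi>, \<tau>). \<integral>z. exp (- \<i> * complex_of_real (fst z \<bullet> \<xi> + snd z * \<tau>)) * u z \<partial>lborel)"

text \<open>Squared X^{s,b} norm, as an extended nonnegative real (infinite if u is not in X^{s,b}).\<close>
definition Xsb_sq :: "real \<Rightarrow> real \<Rightarrow> ((real^'n) \<times> real \<Rightarrow> complex) \<Rightarrow> ennreal" where
  "Xsb_sq s b u = nn_integral lborel (\<lambda>w. ennreal ((1 + norm (fst w)) powr (2 * s)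
        * (1 + \<bar>snd w + (norm (fst w))\<^sup>2\<bar>) powr (2 * b)
        * (cmod (st_fourier u w))\<^sup>2))"

text \<open>Admissible test functions: integrable, bounded, and in X^{s,b}.
  For such f g h the product f conj(g) h is integrable, so its Fourier transform is classical.\<close>
definition admissible :: "real \<Rightarrow> real \<Rightarrow> ((real^'n) \<times> real \<Rightarrow> complex) \<Rightarrow> bool" where
  "admissible s b u \<longleftrightarrow> integrable lborel u \<and> (\<exists>M. \<forall>z. cmod (u z) \<le> M) \<and> Xsb_sq s b u < \<infinity>"

end

theory Submission
  imports Defs "HOL-Probability.Characteristic_Functions"
begin

lemma gauss_integrable_1d:
  assumes d: "d > 0"
  shows "integrable lborel (\<lambda>y::real. exp (- d * y\<^sup>2 / 2))"
proof -
  have "integrable lborel (\<lambda>y. sqrt (2 * pi * (1 / sqrt d)\<^sup>2) * normal_density 0 (1 / sqrt d) y)"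
    using d by (intro integrable_mult_right integrable_normal_density) auto
  moreover have "(\<lambda>y. sqrt (2 * pi * (1 / sqrt d)\<^sup>2) * normal_density 0 (1 / sqrt d) y) = (\<lambda>y::real. exp (- d * y\<^sup>2 / 2))"
    using d by (auto simp: normal_density_def power_divide fun_eq_iff real_sqrt_divide field_simps)
  ultimately show ?thesis by simp
qed

lemma gauss_ft_1d:
  assumes d: "d > 0"
  shows "(\<integral>y. exp (- \<i> * complex_of_real (y * \<eta>)) * complex_of_real (exp (- d * y\<^sup>2 / 2)) \<partial>lborel)
        = complex_of_real (sqrt (2 * pi / d) * exp (- \<eta>\<^sup>2 / (2 * d)))"
proof -
  have ch: "(\<integral>x. std_normal_density x *\<^sub>R iexp (t * x) \<partial>lborel) = complex_of_real (exp (- (t^2) / 2))" for t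
  proof -
    have "char std_normal_distribution t = complex_of_real (exp (- (t^2) / 2))"
      by (simp add: char_std_normal_distribution)
    then show ?thesis unfolding char_def
      by (subst (asm) integral_density) auto
  qed
  let ?f = "\<lambda>y. exp (- \<i> * complex_of_real (y * \<eta>)) * complex_of_real (exp (- d * y\<^sup>2 / 2))"
  have c0: "1 / sqrt d \<noteq> 0" using d by simp
  have "(\<integral>y. ?f y \<partial>lborel) = \<bar>1 / sqrt d\<bar> *\<^sub>R (\<integral>x. ?f (0 + (1 / sqrt d) * x) \<partial>lborel)"
    by (rule lborel_integral_real_affine[OF c0])
  also have "(\<lambda>x. ?f (0 + (1 / sqrt d) * x)) = (\<lambda>x. sqrt (2 * pi) *\<^sub>R (std_normal_density x *\<^sub>R iexp ((- \<eta> / sqrt d) * x)))"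
  proof
    fix x
    have e: "d * (x / sqrt d)\<^sup>2 = x\<^sup>2" using d by (simp add: power_divide)
    show "?f (0 + (1 / sqrt d) * x) = sqrt (2 * pi) *\<^sub>R (std_normal_density x *\<^sub>R iexp ((- \<eta> / sqrt d) * x))"
      unfolding std_normal_density_def using e
      by (simp add: scaleR_conv_of_real mult.commute mult.left_commute mult.assoc)
  qed
  also have "(\<integral>x. sqrt (2 * pi) *\<^sub>R (std_normal_density x *\<^sub>R iexp ((- \<eta> / sqrt d) * x)) \<partial>lborel)
      = sqrt (2 * pi) *\<^sub>R complex_of_real (exp (- ((- \<eta> / sqrt d)^2) / 2))"
    by (simp only: integral_scaleR_right ch)
  finally show ?thesis using d
    by (simp add: scaleR_conv_of_real power_divide real_sqrt_divide field_simps)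
qed

lemma lborel_prod_Basis:
  fixes g :: "'a::euclidean_space \<Rightarrow> real \<Rightarrow> complex"
  assumes int: "\<And>b. b \<in> Basis \<Longrightarrow> integrable lborel (g b)"
  shows "integrable lborel (\<lambda>z::'a. \<Prod>b\<in>Basis. g b (z \<bullet> b))"
    and "(\<integral>z. (\<Prod>b\<in>Basis. g b (z \<bullet> b)) \<partial>lborel) = (\<Prod>b\<in>Basis. \<integral>y. g b y \<partial>lborel)"
proof -
  interpret product_sigma_finite "\<lambda>_::'a. lborel::real measure" by standard
  let ?\<phi> = "\<lambda>f::'a\<Rightarrow>real. \<Sum>b\<in>Basis. f b *\<^sub>R b"
  have phim[measurable]: "?\<phi> \<in> measurable (\<Pi>\<^sub>M b\<in>Basis. lborel) borel" by measurable
  have gm[measurable]: "b \<in> Basis \<Longrightarrow> g b \<in> borel_measurable borel" for b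
    using int[of b] by (auto dest: borel_measurable_integrable)
  have hm: "(\<lambda>z::'a. \<Prod>b\<in>Basis. g b (z \<bullet> b)) \<in> borel_measurable borel"
    by (intro borel_measurable_prod) (auto intro: measurable_compose[OF _ gm])
  have comp: "f \<in> space (\<Pi>\<^sub>M b\<in>Basis. lborel) \<Longrightarrow> (\<Prod>b\<in>Basis. g b (?\<phi> f \<bullet> b)) = (\<Prod>b\<in>Basis. g b (f b))" for f
    by (intro prod.cong refl) (simp add: inner_sum_left inner_Basis if_distrib sum.delta cong: if_cong)
  have pi: "integrable (\<Pi>\<^sub>M b\<in>Basis. lborel) (\<lambda>f. \<Prod>b\<in>Basis. g b (f b))"
    by (rule product_integrable_prod) (auto intro: int)
  show "integrable lborel (\<lambda>z::'a. \<Prod>b\<in>Basis. g b (z \<bullet> b))"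
    apply (subst lborel_eq)
    apply (subst integrable_distr_eq[OF phim hm])
    apply (subst Bochner_Integration.integrable_cong[OF refl comp], assumption)
    by (rule pi)
  have "(\<integral>z. (\<Prod>b\<in>Basis. g b (z \<bullet> b)) \<partial>lborel) = (\<integral>f. (\<Prod>b\<in>Basis. g b (?\<phi> f \<bullet> b)) \<partial>(\<Pi>\<^sub>M b\<in>Basis. lborel))"
    by (subst lborel_eq) (rule integral_distr[OF phim hm])
  also have "\<dots> = (\<integral>f. (\<Prod>b\<in>Basis. g b (f b)) \<partial>(\<Pi>\<^sub>M b\<in>Basis. lborel))"
    by (rule Bochner_Integration.integral_cong) (simp_all add: comp)
  also have "\<dots> = (\<Prod>b\<in>Basis. \<integral>y. g b y \<partial>lborel)"
    by (rule product_integral_prod) (auto intro: int)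
  finally show "(\<integral>z. (\<Prod>b\<in>Basis. g b (z \<bullet> b)) \<partial>lborel) = (\<Prod>b\<in>Basis. \<integral>y. g b y \<partial>lborel)" .
qed

lemma prod_Basis_pair:
  fixes f :: "('a::euclidean_space \<times> 'b::euclidean_space) \<Rightarrow> 'c::comm_monoid_mult"
  shows "(\<Prod>\<beta>\<in>Basis. f \<beta>) = (\<Prod>b\<in>Basis. f (b, 0)) * (\<Prod>b\<in>Basis. f (0, b))"
proof -
  have "inj_on (\<lambda>u. (u::'a, 0::'b)) Basis" "inj_on (\<lambda>u. (0::'a, u::'b)) Basis"
    by (auto intro!: inj_onI)
  thus ?thesis
    unfolding Basis_prod_def
    by (subst prod.union_disjoint) (auto simp: Basis_prod_def prod.reindex)
qed

lemma sum_Basis_pair: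
  fixes f :: "('a::euclidean_space \<times> 'b::euclidean_space) \<Rightarrow> 'c::comm_monoid_add"
  shows "(\<Sum>\<beta>\<in>Basis. f \<beta>) = (\<Sum>b\<in>Basis. f (b, 0)) + (\<Sum>b\<in>Basis. f (0, b))"
proof -
  have "inj_on (\<lambda>u. (u::'a, 0::'b)) Basis" "inj_on (\<lambda>u. (0::'a, u::'b)) Basis"
    by (auto intro!: inj_onI)
  thus ?thesis
    unfolding Basis_prod_def
    by (subst sum.union_disjoint) (auto simp: Basis_prod_def sum.reindex)
qed

lemma norm_sq_Basis: "(norm (x::'a::euclidean_space))\<^sup>2 = (\<Sum>b\<in>Basis. (x \<bullet> b)\<^sup>2)"
proof -
  have "(norm x)\<^sup>2 = x \<bullet> x" by (simp add: power2_norm_eq_inner)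
  also have "\<dots> = (\<Sum>b\<in>Basis. (x \<bullet> b)\<^sup>2)" by (subst euclidean_inner) (simp add: power2_eq_square)
  finally show ?thesis .
qed

definition Dw :: "real \<Rightarrow> real \<Rightarrow> (real^'n) \<times> real \<Rightarrow> real" where
  "Dw a c \<beta> = a * (fst \<beta> \<bullet> fst \<beta>) + c * (snd \<beta> * snd \<beta>)"

lemma quad_split:
  fixes z :: "(real^'n) \<times> real"
  shows "a * (norm (fst z))\<^sup>2 + c * (snd z)\<^sup>2 = (\<Sum>\<beta>\<in>Basis. Dw a c \<beta> * (z \<bullet> \<beta>)\<^sup>2)"
  by (simp add: sum_Basis_pair Dw_def inner_Pair_0 norm_sq_Basis sum_distrib_left)

definition gs :: "real \<Rightarrow> real \<Rightarrow> real^'n \<Rightarrow> real \<Rightarrow> (real^'n) \<times> real \<Rightarrow> complex" where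
  "gs a c k w = (\<lambda>z. exp (\<i> * complex_of_real (fst z \<bullet> k + snd z * w))
      * complex_of_real (exp (- (a * (norm (fst z))\<^sup>2 + c * (snd z)\<^sup>2) / 2)))"

lemma ft1:
  assumes d: "d > 0"
  shows "integrable lborel (\<lambda>y. exp (\<i> * complex_of_real (y * m)) * complex_of_real (exp (- d * y\<^sup>2 / 2)))"
    and "(\<integral>y. exp (\<i> * complex_of_real (y * m)) * complex_of_real (exp (- d * y\<^sup>2 / 2)) \<partial>lborel)
        = complex_of_real (sqrt (2 * pi / d) * exp (- m\<^sup>2 / (2 * d)))"
proof -
  show "integrable lborel (\<lambda>y. exp (\<i> * complex_of_real (y * m)) * complex_of_real (exp (- d * y\<^sup>2 / 2)))"
    by (rule Bochner_Integration.integrable_bound[OF gauss_integrable_1d[OF d]]) (auto simp: norm_mult)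
  have "(\<lambda>y. exp (\<i> * complex_of_real (y * m)) * complex_of_real (exp (- d * y\<^sup>2 / 2)))
     = (\<lambda>y. exp (- \<i> * complex_of_real (y * (- m))) * complex_of_real (exp (- d * y\<^sup>2 / 2)))"
    by simp
  then show "(\<integral>y. exp (\<i> * complex_of_real (y * m)) * complex_of_real (exp (- d * y\<^sup>2 / 2)) \<partial>lborel)
        = complex_of_real (sqrt (2 * pi / d) * exp (- m\<^sup>2 / (2 * d)))"
    using gauss_ft_1d[OF d, of "-m"] by simp
qed

lemma Dw_pos:
  assumes "a > 0" "c > 0" "\<beta> \<in> Basis"
  shows "Dw a c (\<beta> :: (real^'n) \<times> real) > 0"
  using assms unfolding Basis_prod_def Dw_def by auto

lemma gs_product_form:
  fixes z \<kappa> :: "(real^'n) \<times> real"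
  shows "exp (\<i> * complex_of_real (z \<bullet> \<kappa>)) * complex_of_real (exp (- (a * (norm (fst z))\<^sup>2 + c * (snd z)\<^sup>2) / 2))
     = (\<Prod>\<beta>\<in>Basis. exp (\<i> * complex_of_real ((z \<bullet> \<beta>) * (\<kappa> \<bullet> \<beta>))) * complex_of_real (exp (- Dw a c \<beta> * (z \<bullet> \<beta>)\<^sup>2 / 2)))"
proof -
  have 1: "exp (\<i> * complex_of_real (z \<bullet> \<kappa>)) = (\<Prod>\<beta>\<in>Basis. exp (\<i> * complex_of_real ((z \<bullet> \<beta>) * (\<kappa> \<bullet> \<beta>))))"
    by (simp add: euclidean_inner[of z \<kappa>] sum_distrib_left exp_sum[symmetric])
  have 2: "exp (- (a * (norm (fst z))\<^sup>2 + c * (snd z)\<^sup>2) / 2) = (\<Prod>\<beta>\<in>Basis. exp (- Dw a c \<beta> * (z \<bullet> \<beta>)\<^sup>2 / 2))"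
    unfolding quad_split by (simp add: exp_sum[symmetric] sum_divide_distrib sum_negf[symmetric])
  show ?thesis unfolding 1 2 by (simp add: prod.distrib)
qed

lemma gs_ft_general:
  fixes \<kappa> :: "(real^'n) \<times> real"
  assumes a: "a > 0" and c: "c > 0"
  shows "integrable lborel (\<lambda>z. exp (\<i> * complex_of_real (z \<bullet> \<kappa>)) * complex_of_real (exp (- (a * (norm (fst z))\<^sup>2 + c * (snd z)\<^sup>2) / 2)))"
    and "(\<integral>z. exp (\<i> * complex_of_real (z \<bullet> \<kappa>)) * complex_of_real (exp (- (a * (norm (fst z))\<^sup>2 + c * (snd z)\<^sup>2) / 2)) \<partial>lborel)
       = complex_of_real (sqrt (2 * pi / a) ^ CARD('n) * sqrt (2 * pi / c) * exp (- (norm (fst \<kappa>))\<^sup>2 / (2 * a) - (snd \<kappa>)\<^sup>2 / (2 * c)))"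
proof -
  have int: "\<And>\<beta>. \<beta> \<in> Basis \<Longrightarrow> integrable lborel (\<lambda>y. exp (\<i> * complex_of_real (y * (\<kappa> \<bullet> \<beta>))) * complex_of_real (exp (- Dw a c \<beta> * y\<^sup>2 / 2)))"
    using Dw_pos[OF a c] ft1 by blast
  show "integrable lborel (\<lambda>z. exp (\<i> * complex_of_real (z \<bullet> \<kappa>)) * complex_of_real (exp (- (a * (norm (fst z))\<^sup>2 + c * (snd z)\<^sup>2) / 2)))"
    unfolding gs_product_form by (rule lborel_prod_Basis(1)[OF int])
  have "(\<integral>z. exp (\<i> * complex_of_real (z \<bullet> \<kappa>)) * complex_of_real (exp (- (a * (norm (fst z))\<^sup>2 + c * (snd z)\<^sup>2) / 2)) \<partial>lborel)
      = (\<Prod>\<beta>\<in>Basis. \<integral>y. exp (\<i> * complex_of_real (y * (\<kappa> \<bullet> \<beta>))) * complex_of_real (exp (- Dw a c \<beta> * y\<^sup>2 / 2)) \<partial>lborel)"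
    unfolding gs_product_form by (rule lborel_prod_Basis(2)[OF int])
  also have "\<dots> = (\<Prod>\<beta>\<in>Basis. complex_of_real (sqrt (2 * pi / Dw a c \<beta>) * exp (- (\<kappa> \<bullet> \<beta>)\<^sup>2 / (2 * Dw a c \<beta>))))"
    using Dw_pos[OF a c] ft1(2) by (intro prod.cong) auto
  also have "\<dots> = complex_of_real (sqrt (2 * pi / a) ^ CARD('n) * sqrt (2 * pi / c) * exp (- (norm (fst \<kappa>))\<^sup>2 / (2 * a) - (snd \<kappa>)\<^sup>2 / (2 * c)))"
  proof -
    have "(\<Prod>\<beta>\<in>Basis. sqrt (2 * pi / Dw a c \<beta>) * exp (- (\<kappa> \<bullet> \<beta>)\<^sup>2 / (2 * Dw a c \<beta>)))
        = (\<Prod>b\<in>(Basis::(real^'n) set). sqrt (2 * pi / a) * exp (- (fst \<kappa> \<bullet> b)\<^sup>2 / (2 * a)))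
          * (sqrt (2 * pi / c) * exp (- (snd \<kappa>)\<^sup>2 / (2 * c)))"
      by (simp add: prod_Basis_pair Dw_def inner_Pair_0)
    also have "\<dots> = sqrt (2 * pi / a) ^ CARD('n) * sqrt (2 * pi / c) * exp (- (norm (fst \<kappa>))\<^sup>2 / (2 * a) - (snd \<kappa>)\<^sup>2 / (2 * c))"
    proof -
      have "(\<Prod>b\<in>(Basis::(real^'n) set). sqrt (2 * pi / a) * exp (- (fst \<kappa> \<bullet> b)\<^sup>2 / (2 * a)))
          = sqrt (2 * pi / a) ^ CARD('n) * exp (\<Sum>b\<in>(Basis::(real^'n) set). - (fst \<kappa> \<bullet> b)\<^sup>2 / (2 * a))"
        by (simp add: prod.distrib exp_sum)
      also have "(\<Sum>b\<in>(Basis::(real^'n) set). - (fst \<kappa> \<bullet> b)\<^sup>2 / (2 * a)) = - (norm (fst \<kappa>))\<^sup>2 / (2 * a)"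
        by (simp add: norm_sq_Basis sum_divide_distrib sum_negf)
      finally show ?thesis by (simp add: exp_diff exp_minus field_simps)
    qed
    finally show ?thesis by (simp only: of_real_prod[symmetric])
  qed
  finally show "(\<integral>z. exp (\<i> * complex_of_real (z \<bullet> \<kappa>)) * complex_of_real (exp (- (a * (norm (fst z))\<^sup>2 + c * (snd z)\<^sup>2) / 2)) \<partial>lborel)
       = complex_of_real (sqrt (2 * pi / a) ^ CARD('n) * sqrt (2 * pi / c) * exp (- (norm (fst \<kappa>))\<^sup>2 / (2 * a) - (snd \<kappa>)\<^sup>2 / (2 * c)))" .
qed

lemma gs_ft:
  fixes k :: "real^'n"
  assumes a: "a > 0" and c: "c > 0"
  shows "st_fourier (gs a c k w) (\<xi>, \<tau>) = complex_of_real (sqrt (2 * pi / a) ^ CARD('n) * sqrt (2 * pi / c)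
            * exp (- (norm (\<xi> - k))\<^sup>2 / (2 * a) - (\<tau> - w)\<^sup>2 / (2 * c)))"
proof -
  let ?\<kappa> = "(k - \<xi>, w - \<tau>)"
  have eq: "exp (- \<i> * complex_of_real (fst z \<bullet> \<xi> + snd z * \<tau>)) * gs a c k w z
      = exp (\<i> * complex_of_real (z \<bullet> ?\<kappa>)) * complex_of_real (exp (- (a * (norm (fst z))\<^sup>2 + c * (snd z)\<^sup>2) / 2))" for z
  proof -
    have "exp (- \<i> * complex_of_real (fst z \<bullet> \<xi> + snd z * \<tau>)) * exp (\<i> * complex_of_real (fst z \<bullet> k + snd z * w))
        = exp (\<i> * complex_of_real (z \<bullet> ?\<kappa>))"
      by (cases z) (simp add: exp_add[symmetric] inner_diff_right algebra_simps)
    then show ?thesis unfolding gs_def by (simp add: mult.assoc)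
  qed
  have "st_fourier (gs a c k w) (\<xi>, \<tau>) = (\<integral>z. exp (\<i> * complex_of_real (z \<bullet> ?\<kappa>)) * complex_of_real (exp (- (a * (norm (fst z))\<^sup>2 + c * (snd z)\<^sup>2) / 2)) \<partial>lborel)"
    unfolding st_fourier_def prod.case by (rule Bochner_Integration.integral_cong[OF refl eq])
  also have "\<dots> = complex_of_real (sqrt (2 * pi / a) ^ CARD('n) * sqrt (2 * pi / c) * exp (- (norm (fst ?\<kappa>))\<^sup>2 / (2 * a) - (snd ?\<kappa>)\<^sup>2 / (2 * c)))"
    using gs_ft_general(2)[OF a c, of ?\<kappa>] by simp
  also have "norm (fst ?\<kappa>) = norm (\<xi> - k)" by (simp add: norm_minus_commute)
  also have "(snd ?\<kappa>)\<^sup>2 = (\<tau> - w)\<^sup>2" by (simp add: power2_commute)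
  finally show ?thesis .
qed

lemma gs_ft_sq:
  fixes k :: "real^'n"
  assumes a: "a > 0" and c: "c > 0"
  shows "(cmod (st_fourier (gs a c k w) \<zeta>))\<^sup>2 = (2 * pi / a) ^ CARD('n) * (2 * pi / c)
            * exp (- (norm (fst \<zeta> - k))\<^sup>2 / a - (snd \<zeta> - w)\<^sup>2 / c)"
proof -
  obtain \<xi> \<tau> where z: "\<zeta> = (\<xi>, \<tau>)" by (cases \<zeta>)
  have e: "(exp (- (norm (\<xi> - k))\<^sup>2 / (2 * a) - (\<tau> - w)\<^sup>2 / (2 * c)))\<^sup>2 = exp (- (norm (\<xi> - k))\<^sup>2 / a - (\<tau> - w)\<^sup>2 / c)"
    by (simp add: power2_eq_square exp_add[symmetric] field_simps)
  have s1: "(sqrt (2 * pi / a) ^ CARD('n))\<^sup>2 = (2 * pi / a) ^ CARD('n)"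
    using a by (simp add: power_mult[symmetric] mult.commute[of _ 2] power_mult)
  have s2: "(sqrt (2 * pi / c))\<^sup>2 = 2 * pi / c" using c by simp
  have "(cmod (st_fourier (gs a c k w) \<zeta>))\<^sup>2 = (sqrt (2 * pi / a) ^ CARD('n) * sqrt (2 * pi / c)
            * exp (- (norm (\<xi> - k))\<^sup>2 / (2 * a) - (\<tau> - w)\<^sup>2 / (2 * c)))\<^sup>2"
    unfolding z gs_ft[OF a c] norm_of_real by simp
  also have "\<dots> = (2 * pi / a) ^ CARD('n) * (2 * pi / c) * exp (- (norm (\<xi> - k))\<^sup>2 / a - (\<tau> - w)\<^sup>2 / c)"
    unfolding power_mult_distrib s1 s2 e ..
  finally show ?thesis by (simp add: z)
qed

lemma gs_integrable:
  assumes a: "a > 0" and c: "c > 0"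
  shows "integrable lborel (gs a c k w)"
proof -
  have "gs a c k w = (\<lambda>z. exp (\<i> * complex_of_real (z \<bullet> (k, w))) * complex_of_real (exp (- (a * (norm (fst z))\<^sup>2 + c * (snd z)\<^sup>2) / 2)))"
    unfolding gs_def by (auto simp: fun_eq_iff inner_prod_def)
  then show ?thesis using gs_ft_general(1)[OF a c] by simp
qed

lemma gs_bounded:
  assumes a: "a \<ge> 0" and c: "c \<ge> 0"
  shows "cmod (gs a c k w z) \<le> 1"
proof -
  have "0 \<le> a * (norm (fst z))\<^sup>2 + c * (snd z)\<^sup>2" using a c by simp
  then show ?thesis unfolding gs_def by (simp add: norm_mult del: of_real_add of_real_mult)
qed

lemma gs_cube: "gs a c k w z * cnj (gs a c k w z) * gs a c k w z = gs (3 * a) (3 * c) k w z"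
proof -
  define E where "E = exp (\<i> * complex_of_real (fst z \<bullet> k + snd z * w))"
  define q where "q = a * (norm (fst z))\<^sup>2 + c * (snd z)\<^sup>2"
  have n1: "cmod E = 1" unfolding E_def by (rule norm_exp_i_times)
  have EE: "E * cnj E = 1" by (metis complex_norm_square n1 of_real_1 power_one)
  have g: "gs a c k w z = E * complex_of_real (exp (- q / 2))" unfolding gs_def E_def q_def ..
  have g3: "gs (3 * a) (3 * c) k w z = E * complex_of_real (exp (- (3 * q) / 2))"
    unfolding gs_def E_def q_def by (simp add: algebra_simps)
  have x: "exp (- q / 2) * exp (- q / 2) * exp (- q / 2) = exp (- (3 * q) / 2)"
    by (simp add: exp_add[symmetric])
  have "gs a c k w z * cnj (gs a c k w z) * gs a c k w z
      = (E * cnj E) * E * complex_of_real (exp (- q / 2) * exp (- q / 2) * exp (- q / 2))"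
    unfolding g by (simp add: mult_ac)
  also have "\<dots> = gs (3 * a) (3 * c) k w z" unfolding EE x g3 by simp
  finally show ?thesis .
qed

lemma gauss_nn_1d:
  assumes d: "d > 0"
  shows "(\<integral>\<^sup>+y. ennreal (exp (- (y - m)\<^sup>2 / (2 * d))) \<partial>lborel) = ennreal (sqrt (2 * pi * d))"
proof -
  have eq: "exp (- (y - m)\<^sup>2 / (2 * d)) = sqrt (2 * pi * d) * normal_density m (sqrt d) y" for y
    using d by (simp add: normal_density_def)
  have "(\<integral>\<^sup>+y. ennreal (normal_density m (sqrt d) y) \<partial>lborel) = 1"
    using d by (subst nn_integral_eq_integral) auto
  then show ?thesis
    unfolding eq using d
    by (simp add: ennreal_mult nn_integral_cmult)
qed

lemma gauss_nn:
  fixes k :: "real^'n"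
  assumes a: "a > 0" and c: "c > 0"
  shows "(\<integral>\<^sup>+\<zeta>. ennreal (exp (- (norm (fst \<zeta> - k))\<^sup>2 / (2 * a) - (snd \<zeta> - w)\<^sup>2 / (2 * c))) \<partial>lborel)
       = ennreal (sqrt (2 * pi * a) ^ CARD('n) * sqrt (2 * pi * c))"
proof -
  let ?\<kappa> = "(k, w)"
  let ?f = "\<lambda>\<beta> y. ennreal (exp (- (y - ?\<kappa> \<bullet> \<beta>)\<^sup>2 / (2 * Dw a c \<beta>)))"
  have pw: "ennreal (exp (- (norm (fst \<zeta> - k))\<^sup>2 / (2 * a) - (snd \<zeta> - w)\<^sup>2 / (2 * c)))
      = (\<Prod>\<beta>\<in>Basis. ?f \<beta> (\<zeta> \<bullet> \<beta>))" for \<zeta> :: "(real^'n) \<times> real"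
  proof -
    have "(\<Sum>\<beta>\<in>Basis. - (\<zeta> \<bullet> \<beta> - ?\<kappa> \<bullet> \<beta>)\<^sup>2 / (2 * Dw a c \<beta>))
        = (\<Sum>b\<in>(Basis::(real^'n) set). - ((fst \<zeta> - k) \<bullet> b)\<^sup>2 / (2 * a)) - (snd \<zeta> - w)\<^sup>2 / (2 * c)"
      by (simp add: sum_Basis_pair Dw_def inner_Pair_0 inner_diff_left)
    also have "\<dots> = - (norm (fst \<zeta> - k))\<^sup>2 / (2 * a) - (snd \<zeta> - w)\<^sup>2 / (2 * c)"
      by (simp add: norm_sq_Basis sum_divide_distrib sum_negf)
    finally have "exp (- (norm (fst \<zeta> - k))\<^sup>2 / (2 * a) - (snd \<zeta> - w)\<^sup>2 / (2 * c))
        = (\<Prod>\<beta>\<in>Basis. exp (- (\<zeta> \<bullet> \<beta> - ?\<kappa> \<bullet> \<beta>)\<^sup>2 / (2 * Dw a c \<beta>)))"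
      by (simp add: exp_sum[symmetric])
    then show ?thesis by (simp add: prod_ennreal)
  qed
  have "(\<integral>\<^sup>+\<zeta>. ennreal (exp (- (norm (fst \<zeta> - k))\<^sup>2 / (2 * a) - (snd \<zeta> - w)\<^sup>2 / (2 * c))) \<partial>lborel)
      = (\<integral>\<^sup>+\<zeta>. (\<Prod>\<beta>\<in>Basis. ?f \<beta> (\<zeta> \<bullet> \<beta>)) \<partial>lborel)"
    by (simp only: pw)
  also have "\<dots> = (\<Prod>\<beta>\<in>Basis. (\<integral>\<^sup>+y. ?f \<beta> y \<partial>lborel))"
    by (rule nn_integral_lborel_prod) auto
  also have "\<dots> = (\<Prod>\<beta>\<in>(Basis :: ((real^'n) \<times> real) set). ennreal (sqrt (2 * pi * Dw a c \<beta>)))"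
  proof (rule prod.cong[OF refl])
    fix \<beta> :: "(real^'n) \<times> real" assume "\<beta> \<in> Basis"
    then show "(\<integral>\<^sup>+y. ?f \<beta> y \<partial>lborel) = ennreal (sqrt (2 * pi * Dw a c \<beta>))"
      using gauss_nn_1d[OF Dw_pos[OF a c]] by blast
  qed
  also have "\<dots> = ennreal (\<Prod>\<beta>\<in>(Basis :: ((real^'n) \<times> real) set). sqrt (2 * pi * Dw a c \<beta>))"
    by (rule prod_ennreal) (simp add: less_imp_le[OF Dw_pos[OF a c]])
  also have "(\<Prod>\<beta>\<in>(Basis :: ((real^'n) \<times> real) set). sqrt (2 * pi * Dw a c \<beta>)) = sqrt (2 * pi * a) ^ CARD('n) * sqrt (2 * pi * c)"
    by (simp add: prod_Basis_pair Dw_def)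
  finally show ?thesis .
qed

lemma Xsb_upper:
  fixes k :: "real^'n"
  assumes a: "a > 0" and c: "c > 0" and Q: "Q \<ge> 0"
    and bnd: "\<And>\<xi> \<tau>. (1 + norm \<xi>) powr (2 * s) * (1 + \<bar>\<tau> + (norm \<xi>)\<^sup>2\<bar>) powr (2 * b)
        \<le> Q * exp ((norm (\<xi> - k))\<^sup>2 / (2 * a) + (\<tau> - w)\<^sup>2 / (2 * c))"
  shows "Xsb_sq s b (gs a c k w) \<le> ennreal ((2 * pi / a) ^ CARD('n) * (2 * pi / c) * Q * (sqrt (2 * pi * a) ^ CARD('n) * sqrt (2 * pi * c)))"
proof -
  define C0 where "C0 = (2 * pi / a) ^ CARD('n) * (2 * pi / c)"
  have C0: "C0 \<ge> 0" unfolding C0_def using a c by simp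
  have pt: "(1 + norm (fst \<zeta>)) powr (2 * s) * (1 + \<bar>snd \<zeta> + (norm (fst \<zeta>))\<^sup>2\<bar>) powr (2 * b) * (cmod (st_fourier (gs a c k w) \<zeta>))\<^sup>2
      \<le> C0 * Q * exp (- (norm (fst \<zeta> - k))\<^sup>2 / (2 * a) - (snd \<zeta> - w)\<^sup>2 / (2 * c))" for \<zeta> :: "(real^'n) \<times> real"
  proof -
    define X where "X = (norm (fst \<zeta> - k))\<^sup>2 / (2 * a) + (snd \<zeta> - w)\<^sup>2 / (2 * c)"
    have e1: "exp (- (norm (fst \<zeta> - k))\<^sup>2 / a - (snd \<zeta> - w)\<^sup>2 / c) = exp (- X) * exp (- X)"
      unfolding X_def using a c by (simp add: exp_add[symmetric] field_simps)
    have e2: "exp (- (norm (fst \<zeta> - k))\<^sup>2 / (2 * a) - (snd \<zeta> - w)\<^sup>2 / (2 * c)) = exp (- X)"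
      unfolding X_def by (simp add: field_simps)
    have w: "(1 + norm (fst \<zeta>)) powr (2 * s) * (1 + \<bar>snd \<zeta> + (norm (fst \<zeta>))\<^sup>2\<bar>) powr (2 * b) \<le> Q * exp X"
      using bnd[of "fst \<zeta>" "snd \<zeta>"] unfolding X_def .
    have "(1 + norm (fst \<zeta>)) powr (2 * s) * (1 + \<bar>snd \<zeta> + (norm (fst \<zeta>))\<^sup>2\<bar>) powr (2 * b) * (cmod (st_fourier (gs a c k w) \<zeta>))\<^sup>2
       = ((1 + norm (fst \<zeta>)) powr (2 * s) * (1 + \<bar>snd \<zeta> + (norm (fst \<zeta>))\<^sup>2\<bar>) powr (2 * b)) * (C0 * exp (- X) * exp (- X))"
      unfolding gs_ft_sq[OF a c] e1 C0_def by (simp add: mult_ac)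
    also have "\<dots> \<le> (Q * exp X) * (C0 * exp (- X) * exp (- X))"
      by (rule mult_right_mono[OF w]) (simp add: C0)
    also have "\<dots> = C0 * Q * exp (- X)" by (simp add: exp_minus field_simps)
    finally show ?thesis unfolding e2 .
  qed
  have "Xsb_sq s b (gs a c k w) \<le> (\<integral>\<^sup>+\<zeta>. ennreal (C0 * Q) * ennreal (exp (- (norm (fst \<zeta> - k))\<^sup>2 / (2 * a) - (snd \<zeta> - w)\<^sup>2 / (2 * c))) \<partial>lborel)"
    unfolding Xsb_sq_def
  proof (intro nn_integral_mono)
    fix \<zeta> :: "(real^'n) \<times> real"
    have "ennreal (C0 * Q) * ennreal (exp (- (norm (fst \<zeta> - k))\<^sup>2 / (2 * a) - (snd \<zeta> - w)\<^sup>2 / (2 * c)))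
        = ennreal (C0 * Q * exp (- (norm (fst \<zeta> - k))\<^sup>2 / (2 * a) - (snd \<zeta> - w)\<^sup>2 / (2 * c)))"
      using C0 Q by (simp add: ennreal_mult)
    then show "ennreal ((1 + norm (fst \<zeta>)) powr (2 * s) * (1 + \<bar>snd \<zeta> + (norm (fst \<zeta>))\<^sup>2\<bar>) powr (2 * b) * (cmod (st_fourier (gs a c k w) \<zeta>))\<^sup>2)
        \<le> ennreal (C0 * Q) * ennreal (exp (- (norm (fst \<zeta> - k))\<^sup>2 / (2 * a) - (snd \<zeta> - w)\<^sup>2 / (2 * c)))"
      using ennreal_leI[OF pt[of \<zeta>]] by (simp only:)
  qed
  also have "\<dots> = ennreal (C0 * Q) * ennreal (sqrt (2 * pi * a) ^ CARD('n) * sqrt (2 * pi * c))"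
    apply (subst nn_integral_cmult)
    subgoal
    proof -
      have h: "(\<lambda>\<zeta>::(real^'n)\<times>real. exp (- (norm (fst \<zeta> - k))\<^sup>2 / (2 * a) - (snd \<zeta> - w)\<^sup>2 / (2 * c))) \<in> borel_measurable borel"
        by (intro borel_measurable_continuous_onI continuous_intros) (use a c in auto)
      show ?thesis unfolding measurable_lborel1 using h by measurable
    qed
    by (subst gauss_nn[OF a c]) (rule refl)
  also have "\<dots> = ennreal ((2 * pi / a) ^ CARD('n) * (2 * pi / c) * Q * (sqrt (2 * pi * a) ^ CARD('n) * sqrt (2 * pi * c)))"
    unfolding C0_def using a c Q by (simp add: ennreal_mult[symmetric])
  finally show ?thesis .
qed

lemma Xsb_lower:
  fixes k :: "real^'n"
  assumes a: "a > 0" and c: "c > 0" and N: "N > 0" and M: "M > 0" and L: "L \<ge> 0"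
    and bnd: "\<And>\<xi> \<tau>. (\<forall>i\<in>Basis. k \<bullet> i + N / 2 \<le> \<xi> \<bullet> i \<and> \<xi> \<bullet> i \<le> k \<bullet> i + N) \<Longrightarrow> w + M / 2 \<le> \<tau> \<Longrightarrow> \<tau> \<le> w + M \<Longrightarrow>
        L \<le> (1 + norm \<xi>) powr (2 * s) * (1 + \<bar>\<tau> + (norm \<xi>)\<^sup>2\<bar>) powr (2 * b)
             * exp (- (norm (\<xi> - k))\<^sup>2 / a - (\<tau> - w)\<^sup>2 / c)"
  shows "ennreal ((2 * pi / a) ^ CARD('n) * (2 * pi / c) * L * ((N / 2) ^ CARD('n) * (M / 2))) \<le> Xsb_sq s b (gs a c k w)"
proof -
  define C0 where "C0 = (2 * pi / a) ^ CARD('n) * (2 * pi / c)"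
  have C0: "C0 \<ge> 0" unfolding C0_def using a c by simp
  define B where "B = cbox (k + (N / 2) *\<^sub>R One, w + M / 2) (k + N *\<^sub>R One, w + M)"
  have B_eq: "B = cbox (k + (N / 2) *\<^sub>R One) (k + N *\<^sub>R One) \<times> {w + M / 2 .. w + M}"
    unfolding B_def cbox_Pair_eq by simp
  have memB: "(\<forall>i\<in>Basis. k \<bullet> i + N / 2 \<le> fst \<zeta> \<bullet> i \<and> fst \<zeta> \<bullet> i \<le> k \<bullet> i + N) \<and> w + M / 2 \<le> snd \<zeta> \<and> snd \<zeta> \<le> w + M"
    if "\<zeta> \<in> B" for \<zeta> :: "(real^'n) \<times> real"
    using that unfolding B_eq by (auto simp: mem_box inner_add_left)
  have mB: "emeasure lborel B = ennreal ((N / 2) ^ CARD('n) * (M / 2))"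
  proof -
    have "emeasure lborel B = (\<Prod>\<beta>\<in>Basis. ((k + N *\<^sub>R One, w + M) - (k + (N / 2) *\<^sub>R One, w + M / 2)) \<bullet> \<beta>)"
      unfolding B_def using N M
      by (intro emeasure_lborel_cbox) (auto simp: Basis_prod_def inner_add_left)
    also have "(\<Prod>\<beta>\<in>Basis. ((k + N *\<^sub>R One, w + M) - (k + (N / 2) *\<^sub>R One, w + M / 2)) \<bullet> \<beta>) = (N / 2) ^ CARD('n) * (M / 2)"
      by (simp add: prod_Basis_pair inner_Pair_0 inner_diff_left inner_add_left)
    finally show ?thesis by simp
  qed
  have pt: "ennreal (C0 * L) * indicator B \<zeta> \<le> ennreal ((1 + norm (fst \<zeta>)) powr (2 * s) * (1 + \<bar>snd \<zeta> + (norm (fst \<zeta>))\<^sup>2\<bar>) powr (2 * b) * (cmod (st_fourier (gs a c k w) \<zeta>))\<^sup>2)"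
    for \<zeta> :: "(real^'n) \<times> real"
  proof (cases "\<zeta> \<in> B")
    case True
    from memB[OF True] have "L \<le> (1 + norm (fst \<zeta>)) powr (2 * s) * (1 + \<bar>snd \<zeta> + (norm (fst \<zeta>))\<^sup>2\<bar>) powr (2 * b)
             * exp (- (norm (fst \<zeta> - k))\<^sup>2 / a - (snd \<zeta> - w)\<^sup>2 / c)"
      using bnd by blast
    then have "C0 * L \<le> C0 * ((1 + norm (fst \<zeta>)) powr (2 * s) * (1 + \<bar>snd \<zeta> + (norm (fst \<zeta>))\<^sup>2\<bar>) powr (2 * b)
             * exp (- (norm (fst \<zeta> - k))\<^sup>2 / a - (snd \<zeta> - w)\<^sup>2 / c))"
      by (rule mult_left_mono) (rule C0)
    then show ?thesis using True unfolding gs_ft_sq[OF a c] C0_def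
      by (simp add: ennreal_leI mult_ac)
  qed (simp)
  have "ennreal (C0 * L) * emeasure lborel B \<le> Xsb_sq s b (gs a c k w)"
    unfolding Xsb_sq_def
    apply (subst nn_integral_cmult_indicator[symmetric])
    subgoal unfolding B_def by simp
    by (intro nn_integral_mono pt)
  then show ?thesis unfolding mB C0_def using a c L N M
    by (simp add: ennreal_mult[symmetric] mult_ac)
qed

lemma powr_exp_bound:
  fixes r m :: real
  assumes r: "r \<ge> 0" and m: "m \<ge> 0"
  shows "(1 + r) powr m \<le> exp (m\<^sup>2 / 2) * exp (r\<^sup>2 / 2)"
proof -
  have "(1 + r) powr m \<le> (exp r) powr m"
    using r m by (intro powr_mono2) (auto simp: exp_ge_add_one_self add.commute)
  also have "\<dots> = exp (m * r)" by (simp add: powr_def mult.commute)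
  also have "\<dots> \<le> exp (m\<^sup>2 / 2 + r\<^sup>2 / 2)"
  proof -
    have "0 \<le> (m - r)\<^sup>2" by simp
    then have "m * r \<le> m\<^sup>2 / 2 + r\<^sup>2 / 2" by (simp add: power2_eq_square algebra_simps)
    then show ?thesis by simp
  qed
  also have "\<dots> = exp (m\<^sup>2 / 2) * exp (r\<^sup>2 / 2)" by (simp add: exp_add)
  finally show ?thesis .
qed

lemma weight_to_exp:
  fixes W G r \<beta> m1 m2 :: real
  assumes "W \<le> G * (1 + r) powr m1 * (1 + \<beta>) powr m2" "G \<ge> 0" "r \<ge> 0" "\<beta> \<ge> 0" "m1 \<ge> 0" "m2 \<ge> 0"
  shows "W \<le> (G * exp (m1\<^sup>2 / 2) * exp (m2\<^sup>2 / 2)) * exp (r\<^sup>2 / 2 + \<beta>\<^sup>2 / 2)"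
proof -
  have "W \<le> G * (1 + r) powr m1 * (1 + \<beta>) powr m2" by fact
  also have "\<dots> \<le> G * (exp (m1\<^sup>2 / 2) * exp (r\<^sup>2 / 2)) * (exp (m2\<^sup>2 / 2) * exp (\<beta>\<^sup>2 / 2))"
    using assms by (intro mult_mono powr_exp_bound) auto
  also have "\<dots> = (G * exp (m1\<^sup>2 / 2) * exp (m2\<^sup>2 / 2)) * exp (r\<^sup>2 / 2 + \<beta>\<^sup>2 / 2)"
    by (simp add: exp_add)
  finally show ?thesis .
qed

lemma time_weight_up:
  fixes v P X :: real
  assumes "1 + \<bar>v\<bar> \<le> P * X" "P \<ge> 1" "X \<ge> 1"
  shows "(1 + \<bar>v\<bar>) powr (2 * b) \<le> P powr (2 * max b 0) * X powr (2 * max b 0)"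
proof (cases "b \<ge> 0")
  case True
  then have "(1 + \<bar>v\<bar>) powr (2 * b) \<le> (P * X) powr (2 * b)"
    using assms by (intro powr_mono2) auto
  also have "\<dots> = P powr (2 * max b 0) * X powr (2 * max b 0)"
    using True assms by (simp add: powr_mult)
  finally show ?thesis .
next
  case False
  then have "(1 + \<bar>v\<bar>) powr (2 * b) \<le> 1"
    using powr_mono[of "2 * b" 0 "1 + \<bar>v\<bar>"] by (auto split: if_splits)
  then show ?thesis using False assms by simp
qed

lemma caseA_up:
  fixes \<xi> :: "real^'n" and N s b \<tau> :: real
  assumes N: "N \<ge> 1" and s: "s \<ge> 0"
  defines "B \<equiv> max b 0"
  shows "(1 + norm \<xi>) powr (2 * s) * (1 + \<bar>\<tau> + (norm \<xi>)\<^sup>2\<bar>) powr (2 * b)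
     \<le> ((N powr (2 * s) * (N\<^sup>2) powr (2 * B)) * exp ((2 * s + 4 * B)\<^sup>2 / 2) * exp ((2 * B)\<^sup>2 / 2))
        * exp ((norm (\<xi> - 0))\<^sup>2 / (2 * N\<^sup>2) + (\<tau> - 0)\<^sup>2 / (2 * (N\<^sup>2)\<^sup>2))"
proof -
  define r where "r = norm \<xi> / N"
  define \<beta> where "\<beta> = \<bar>\<tau>\<bar> / N\<^sup>2"
  have N0: "N > 0" using N by simp
  have r0: "r \<ge> 0" and b0: "\<beta> \<ge> 0" unfolding r_def \<beta>_def using N0 by auto
  have nx: "norm \<xi> = N * r" unfolding r_def using N0 by simp
  have nt: "\<bar>\<tau>\<bar> = N\<^sup>2 * \<beta>" unfolding \<beta>_def using N0 by simp
  have B0: "B \<ge> 0" unfolding B_def by simp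
  have sp: "(1 + norm \<xi>) powr (2 * s) \<le> N powr (2 * s) * (1 + r) powr (2 * s)"
  proof -
    have "1 + norm \<xi> \<le> N * (1 + r)" unfolding nx using N by (simp add: algebra_simps)
    then have "(1 + norm \<xi>) powr (2 * s) \<le> (N * (1 + r)) powr (2 * s)"
      using s by (intro powr_mono2) auto
    also have "\<dots> = N powr (2 * s) * (1 + r) powr (2 * s)" using N0 r0 by (simp add: powr_mult)
    finally show ?thesis .
  qed
  have tp: "(1 + \<bar>\<tau> + (norm \<xi>)\<^sup>2\<bar>) powr (2 * b) \<le> (N\<^sup>2) powr (2 * B) * ((1 + \<beta>) * ((1 + r) * (1 + r))) powr (2 * B)"
    unfolding B_def
  proof (rule time_weight_up)
    have "1 + \<bar>\<tau> + (norm \<xi>)\<^sup>2\<bar> \<le> 1 + \<bar>\<tau>\<bar> + (norm \<xi>)\<^sup>2"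
      using abs_triangle_ineq[of \<tau> "(norm \<xi>)\<^sup>2"] by simp
    also have "\<dots> = 1 + N\<^sup>2 * \<beta> + N\<^sup>2 * r\<^sup>2" unfolding nt nx by (simp add: power_mult_distrib)
    also have "\<dots> \<le> N\<^sup>2 * ((1 + \<beta>) * ((1 + r) * (1 + r)))"
    proof -
      have "1 \<le> N\<^sup>2" using N by simp
      moreover have "N\<^sup>2 * \<beta> \<le> N\<^sup>2 * \<beta> * (1 + r) * (1 + r)"
        using r0 b0 by (simp add: mult_le_cancel_left1 algebra_simps mult_nonneg_nonneg)
      moreover have "N\<^sup>2 * r\<^sup>2 + N\<^sup>2 \<le> N\<^sup>2 * (1 + r) * (1 + r)"
      proof -
        have "0 \<le> N * (N * r)" using N0 r0 by simp
        then show ?thesis by (simp add: algebra_simps power2_eq_square)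
      qed
      moreover have "N\<^sup>2 * ((1 + \<beta>) * ((1 + r) * (1 + r))) = N\<^sup>2 * (1 + r) * (1 + r) + N\<^sup>2 * \<beta> * (1 + r) * (1 + r)"
        by (simp add: algebra_simps)
      ultimately show ?thesis by linarith
    qed
    finally show "1 + \<bar>\<tau> + (norm \<xi>)\<^sup>2\<bar> \<le> N\<^sup>2 * ((1 + \<beta>) * ((1 + r) * (1 + r)))" .
    show "1 \<le> N\<^sup>2" using N by simp
    have h1: "1 \<le> 1 + r" using r0 by simp
    have h2: "1 \<le> (1 + r) * (1 + r)" using mult_mono[OF h1 h1] r0 by simp
    have h3: "1 \<le> 1 + \<beta>" using b0 by simp
    show "1 \<le> (1 + \<beta>) * ((1 + r) * (1 + r))" using mult_mono[OF h3 h2] b0 by simp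
  qed
  have tp2: "((1 + \<beta>) * ((1 + r) * (1 + r))) powr (2 * B) = (1 + \<beta>) powr (2 * B) * (1 + r) powr (4 * B)"
    using r0 b0 by (simp add: powr_mult powr_add[symmetric])
  have main: "(1 + norm \<xi>) powr (2 * s) * (1 + \<bar>\<tau> + (norm \<xi>)\<^sup>2\<bar>) powr (2 * b)
      \<le> (N powr (2 * s) * (N\<^sup>2) powr (2 * B)) * (1 + r) powr (2 * s + 4 * B) * (1 + \<beta>) powr (2 * B)"
  proof -
    have "(1 + norm \<xi>) powr (2 * s) * (1 + \<bar>\<tau> + (norm \<xi>)\<^sup>2\<bar>) powr (2 * b)
       \<le> (N powr (2 * s) * (1 + r) powr (2 * s)) * ((N\<^sup>2) powr (2 * B) * ((1 + \<beta>) powr (2 * B) * (1 + r) powr (4 * B)))"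
      using sp tp unfolding tp2 by (intro mult_mono) auto
    also have "\<dots> = (N powr (2 * s) * (N\<^sup>2) powr (2 * B)) * (1 + r) powr (2 * s + 4 * B) * (1 + \<beta>) powr (2 * B)"
      using r0 by (simp add: powr_add mult_ac)
    finally show ?thesis .
  qed
  have "(1 + norm \<xi>) powr (2 * s) * (1 + \<bar>\<tau> + (norm \<xi>)\<^sup>2\<bar>) powr (2 * b)
     \<le> ((N powr (2 * s) * (N\<^sup>2) powr (2 * B)) * exp ((2 * s + 4 * B)\<^sup>2 / 2) * exp ((2 * B)\<^sup>2 / 2)) * exp (r\<^sup>2 / 2 + \<beta>\<^sup>2 / 2)"
    by (rule weight_to_exp[OF main]) (use r0 b0 s B0 in auto)
  also have "r\<^sup>2 / 2 + \<beta>\<^sup>2 / 2 = (norm (\<xi> - 0))\<^sup>2 / (2 * N\<^sup>2) + (\<tau> - 0)\<^sup>2 / (2 * (N\<^sup>2)\<^sup>2)"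
    unfolding r_def \<beta>_def using N0 by (simp add: power_divide power2_abs)
  finally show ?thesis .
qed

lemma card_Basis_vec: "card (Basis :: (real^'n) set) = CARD('n)"
  using DIM_cart[where 'a=real and 'b='n] by simp

lemma normsq_box_upper:
  fixes \<eta> :: "real^'n" and R :: real
  assumes "\<forall>i\<in>Basis. 0 \<le> \<eta> \<bullet> i \<and> \<eta> \<bullet> i \<le> R"
  shows "(norm \<eta>)\<^sup>2 \<le> CARD('n) * R\<^sup>2"
proof -
  have "(norm \<eta>)\<^sup>2 = (\<Sum>i\<in>Basis. (\<eta> \<bullet> i)\<^sup>2)" by (rule norm_sq_Basis)
  also have "\<dots> \<le> (\<Sum>i\<in>(Basis::(real^'n) set). R\<^sup>2)"
    using assms by (intro sum_mono power_mono) auto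
  also have "\<dots> = CARD('n) * R\<^sup>2" by (simp add: card_Basis_vec)
  finally show ?thesis .
qed

lemma norm_box_lower:
  fixes \<eta> :: "real^'n" and R :: real
  assumes "\<forall>i\<in>Basis. R \<le> \<eta> \<bullet> i"
  shows "R \<le> norm \<eta>"
proof -
  obtain i :: "real^'n" where i: "i \<in> Basis" using nonempty_Basis by blast
  have "R \<le> \<eta> \<bullet> i" using assms i by blast
  also have "\<dots> \<le> \<bar>\<eta> \<bullet> i\<bar>" by simp
  also have "\<dots> \<le> norm \<eta>" using Basis_le_norm[OF i] .
  finally show ?thesis .
qed

definition cb :: "real \<Rightarrow> real \<Rightarrow> real" where
  "cb P b = (if b \<ge> 0 then P powr (- 2 * b) else (1 / 2) powr (- 2 * b))"

lemma cb_pos: "P > 0 \<Longrightarrow> cb P b > 0" unfolding cb_def by auto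

lemma time_weight_low:
  fixes v X P :: real
  assumes X: "X > 0" and P: "P \<ge> 1" and v1: "X / 2 \<le> v" and v2: "1 + v \<le> P * X"
  shows "cb P b * X powr (- 2 * b) \<le> (1 + \<bar>v\<bar>) powr (- 2 * b)"
proof -
  have v0: "v \<ge> 0" using v1 X by simp
  show ?thesis
  proof (cases "b \<ge> 0")
    case True
    have "cb P b * X powr (- 2 * b) = (P * X) powr (- 2 * b)"
      using True X P unfolding cb_def by (simp add: powr_mult)
    also have "\<dots> \<le> (1 + \<bar>v\<bar>) powr (- 2 * b)"
      using True v0 v2 by (intro powr_mono2') auto
    finally show ?thesis .
  next
    case False
    have "cb P b * X powr (- 2 * b) = (X / 2) powr (- 2 * b)"
      using False X unfolding cb_def by (simp add: powr_mult powr_divide)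
    also have "\<dots> \<le> (1 + \<bar>v\<bar>) powr (- 2 * b)"
      using False v0 v1 X by (intro powr_mono2) auto
    finally show ?thesis .
  qed
qed

lemma caseA_low:
  fixes \<xi> :: "real^'n" and N s b \<tau> :: real
  assumes N: "N \<ge> 1" and s: "s \<ge> 0"
    and box: "\<forall>i\<in>Basis. (0::real^'n) \<bullet> i + N / 2 \<le> \<xi> \<bullet> i \<and> \<xi> \<bullet> i \<le> 0 \<bullet> i + N"
    and t1: "0 + N\<^sup>2 / 2 \<le> \<tau>" and t2: "\<tau> \<le> 0 + N\<^sup>2"
  shows "(1 / 2) powr (2 * s) * N powr (2 * s) * (cb (real CARD('n) + 2) b * (N\<^sup>2) powr (- 2 * b)) * exp (- real CARD('n) / 3) * exp (- 1 / 3)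
     \<le> (1 + norm \<xi>) powr (2 * s) * (1 + \<bar>\<tau> + (norm \<xi>)\<^sup>2\<bar>) powr (2 * - b)
        * exp (- (norm (\<xi> - 0))\<^sup>2 / (3 * N\<^sup>2) - (\<tau> - 0)\<^sup>2 / (3 * (N\<^sup>2)\<^sup>2))"
proof -
  have N0: "N > 0" using N by simp
  have nsq: "(norm \<xi>)\<^sup>2 \<le> CARD('n) * N\<^sup>2"
    using box N0 by (intro normsq_box_upper) auto
  have nlo: "N / 2 \<le> norm \<xi>" using box by (intro norm_box_lower) auto
  have sp: "(1 / 2) powr (2 * s) * N powr (2 * s) \<le> (1 + norm \<xi>) powr (2 * s)"
  proof -
    have "(1 / 2) powr (2 * s) * N powr (2 * s) = (N / 2) powr (2 * s)" using N0 by (simp add: powr_mult powr_divide)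
    also have "\<dots> \<le> (1 + norm \<xi>) powr (2 * s)" using nlo s N0 by (intro powr_mono2) auto
    finally show ?thesis .
  qed
  have tp: "cb (real CARD('n) + 2) b * (N\<^sup>2) powr (- 2 * b) \<le> (1 + \<bar>\<tau> + (norm \<xi>)\<^sup>2\<bar>) powr (2 * - b)"
  proof -
    have "cb (real CARD('n) + 2) b * (N\<^sup>2) powr (- 2 * b) \<le> (1 + \<bar>\<tau> + (norm \<xi>)\<^sup>2\<bar>) powr (- 2 * b)"
    proof (rule time_weight_low)
      show "N\<^sup>2 > 0" using N0 by simp
      show "1 \<le> real CARD('n) + 2" by simp
      show "N\<^sup>2 / 2 \<le> \<tau> + (norm \<xi>)\<^sup>2" using t1 zero_le_power2[of "norm \<xi>"] by linarith
      have "1 \<le> N\<^sup>2" using N by simp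
      then show "1 + (\<tau> + (norm \<xi>)\<^sup>2) \<le> (real CARD('n) + 2) * N\<^sup>2"
        using t2 nsq by (simp add: algebra_simps)
    qed
    then show ?thesis by simp
  qed
  have ex: "exp (- real CARD('n) / 3) * exp (- 1 / 3) \<le> exp (- (norm (\<xi> - 0))\<^sup>2 / (3 * N\<^sup>2) - (\<tau> - 0)\<^sup>2 / (3 * (N\<^sup>2)\<^sup>2))"
  proof -
    have a1: "(norm \<xi>)\<^sup>2 / (3 * N\<^sup>2) \<le> real CARD('n) / 3"
      using nsq N0 by (simp add: divide_simps)
    have "\<tau>\<^sup>2 \<le> (N\<^sup>2)\<^sup>2" using t1 t2 N0 by (intro power_mono) auto
    then have a2: "\<tau>\<^sup>2 / (3 * (N\<^sup>2)\<^sup>2) \<le> 1 / 3" using N0 by (simp add: divide_simps)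
    have "exp (- real CARD('n) / 3) * exp (- 1 / 3) = exp (- real CARD('n) / 3 - 1 / 3)"
    proof -
      have "- real CARD('n) / 3 - 1 / 3 = - real CARD('n) / 3 + (- 1 / 3)" by simp
      then show ?thesis by (simp only: exp_add)
    qed
    also have "\<dots> \<le> exp (- (norm (\<xi> - 0))\<^sup>2 / (3 * N\<^sup>2) - (\<tau> - 0)\<^sup>2 / (3 * (N\<^sup>2)\<^sup>2))"
      using a1 a2 by simp
    finally show ?thesis .
  qed
  have "(1 / 2) powr (2 * s) * N powr (2 * s) * (cb (real CARD('n) + 2) b * (N\<^sup>2) powr (- 2 * b)) * (exp (- real CARD('n) / 3) * exp (- 1 / 3))
     \<le> (1 + norm \<xi>) powr (2 * s) * (1 + \<bar>\<tau> + (norm \<xi>)\<^sup>2\<bar>) powr (2 * - b)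
        * exp (- (norm (\<xi> - 0))\<^sup>2 / (3 * N\<^sup>2) - (\<tau> - 0)\<^sup>2 / (3 * (N\<^sup>2)\<^sup>2))"
  proof -
    have "0 \<le> cb (real CARD('n) + 2) b" using cb_pos[of "real CARD('n) + 2" b] by simp
    then show ?thesis using sp tp ex by (intro mult_mono) auto
  qed
  then show ?thesis by (simp add: mult.assoc)
qed

lemma sq_expand:
  fixes \<xi> k :: "real^'n"
  shows "\<tau> + (norm \<xi>)\<^sup>2 = (\<tau> - - (norm k)\<^sup>2) + 2 * (k \<bullet> (\<xi> - k)) + (norm (\<xi> - k))\<^sup>2"
proof -
  have "(norm \<xi>)\<^sup>2 = (norm k)\<^sup>2 + 2 * (k \<bullet> (\<xi> - k)) + (norm (\<xi> - k))\<^sup>2"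
    unfolding power2_norm_eq_inner by (simp add: inner_diff_left inner_diff_right inner_commute algebra_simps)
  then show ?thesis by simp
qed

lemma caseB_up:
  fixes \<xi> k :: "real^'n" and K s b \<tau> :: real
  assumes K: "K \<ge> 1" and s: "s \<le> 0" and nk1: "K \<le> norm k"
  defines "B \<equiv> max b 0"
  shows "(1 + norm \<xi>) powr (2 * s) * (1 + \<bar>\<tau> + (norm \<xi>)\<^sup>2\<bar>) powr (2 * b)
     \<le> ((K powr (2 * s) * (K + norm k) powr (2 * B)) * exp ((- 2 * s + 4 * B)\<^sup>2 / 2) * exp ((2 * B)\<^sup>2 / 2))
        * exp ((norm (\<xi> - k))\<^sup>2 / (2 * 1) + (\<tau> - - (norm k)\<^sup>2)\<^sup>2 / (2 * K\<^sup>2))"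
proof -
  define r where "r = norm (\<xi> - k)"
  define \<beta> where "\<beta> = \<bar>\<tau> - - (norm k)\<^sup>2\<bar> / K"
  have K0: "K > 0" using K by simp
  have r0: "r \<ge> 0" and b0: "\<beta> \<ge> 0" unfolding r_def \<beta>_def using K0 by auto
  have nt: "\<bar>\<tau> - - (norm k)\<^sup>2\<bar> = K * \<beta>" unfolding \<beta>_def using K0 by simp
  have B0: "B \<ge> 0" unfolding B_def by simp
  have sp: "(1 + norm \<xi>) powr (2 * s) \<le> K powr (2 * s) * (1 + r) powr (- 2 * s)"
  proof -
    have tri: "norm k \<le> norm \<xi> + r" unfolding r_def using norm_triangle_ineq4[of \<xi> "\<xi> - k"] by simp
    have "K \<le> 1 + norm k" using nk1 by simp
    also have "\<dots> \<le> (1 + norm \<xi>) * (1 + r)" 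
    proof -
      have "0 \<le> r * norm \<xi>" using r0 by simp
      moreover have "(1 + norm \<xi>) * (1 + r) = 1 + norm \<xi> + r + r * norm \<xi>" by (simp add: algebra_simps)
      ultimately show ?thesis using tri by linarith
    qed
    finally have h: "K / (1 + r) \<le> 1 + norm \<xi>" using r0 by (simp add: divide_simps mult.commute)
    have "(1 + norm \<xi>) powr (2 * s) \<le> (K / (1 + r)) powr (2 * s)"
      using s h K0 r0 by (intro powr_mono2') auto
    also have "\<dots> = K powr (2 * s) * (1 + r) powr (- 2 * s)"
    proof -
      have "(K / (1 + r)) powr (2 * s) = K powr (2 * s) / (1 + r) powr (2 * s)" using K0 r0 by (simp add: powr_divide)
      also have "\<dots> = K powr (2 * s) * (1 + r) powr (- 2 * s)" using r0 by (simp add: powr_minus divide_inverse)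
      finally show ?thesis .
    qed
    finally show ?thesis .
  qed
  have tp: "(1 + \<bar>\<tau> + (norm \<xi>)\<^sup>2\<bar>) powr (2 * b) \<le> (K + norm k) powr (2 * B) * ((1 + \<beta>) * ((1 + r) * (1 + r))) powr (2 * B)"
    unfolding B_def
  proof (rule time_weight_up)
    have "\<bar>k \<bullet> (\<xi> - k)\<bar> \<le> norm k * r" unfolding r_def by (rule Cauchy_Schwarz_ineq2)
    then have "1 + \<bar>\<tau> + (norm \<xi>)\<^sup>2\<bar> \<le> 1 + K * \<beta> + 2 * (norm k * r) + r\<^sup>2"
      unfolding sq_expand[of \<tau> \<xi> k] r_def[symmetric] nt[symmetric]
      by (smt (verit) abs_triangle_ineq zero_le_power2)
    also have "\<dots> \<le> (K + norm k) * ((1 + \<beta>) * ((1 + r) * (1 + r)))"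
    proof -
      have P1: "1 \<le> K + norm k" using K norm_ge_zero[of k] by linarith
      have e: "(K + norm k) * ((1 + \<beta>) * ((1 + r) * (1 + r)))
          = (K + norm k) + (K + norm k) * \<beta> * ((1 + r) * (1 + r)) + 2 * (K + norm k) * r + (K + norm k) * r\<^sup>2"
        by (simp add: algebra_simps power2_eq_square)
      have "K * \<beta> \<le> (K + norm k) * \<beta> * ((1 + r) * (1 + r))"
      proof -
        have "K * \<beta> \<le> (K + norm k) * \<beta>" using b0 by (simp add: mult_right_mono)
        also have "\<dots> \<le> (K + norm k) * \<beta> * ((1 + r) * (1 + r))"
        proof -
          have "1 \<le> (1 + r) * (1 + r)" using mult_mono[of 1 "1 + r" 1 "1 + r"] r0 by simp
          moreover have "0 \<le> (K + norm k) * \<beta>" using K0 b0 by simp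
          ultimately show ?thesis by (metis mult_le_cancel_left1 mult_1_right mult_left_mono)
        qed
        finally show ?thesis .
      qed
      moreover have "norm k * r \<le> (K + norm k) * r" using K0 r0 by (simp add: mult_right_mono)
      moreover have "r\<^sup>2 \<le> (K + norm k) * r\<^sup>2" using P1 by (simp add: mult_le_cancel_right1)
      ultimately show ?thesis unfolding e using P1 by linarith
    qed
    finally show "1 + \<bar>\<tau> + (norm \<xi>)\<^sup>2\<bar> \<le> (K + norm k) * ((1 + \<beta>) * ((1 + r) * (1 + r)))" .
    show "1 \<le> K + norm k" using K norm_ge_zero[of k] by linarith
    have h1: "1 \<le> 1 + r" using r0 by simp
    have h2: "1 \<le> (1 + r) * (1 + r)" using mult_mono[OF h1 h1] r0 by simp
    have h3: "1 \<le> 1 + \<beta>" using b0 by simp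
    show "1 \<le> (1 + \<beta>) * ((1 + r) * (1 + r))" using mult_mono[OF h3 h2] b0 by simp
  qed
  have tp2: "((1 + \<beta>) * ((1 + r) * (1 + r))) powr (2 * B) = (1 + \<beta>) powr (2 * B) * (1 + r) powr (4 * B)"
    using r0 b0 by (simp add: powr_mult powr_add[symmetric])
  have main: "(1 + norm \<xi>) powr (2 * s) * (1 + \<bar>\<tau> + (norm \<xi>)\<^sup>2\<bar>) powr (2 * b)
      \<le> (K powr (2 * s) * (K + norm k) powr (2 * B)) * (1 + r) powr (- 2 * s + 4 * B) * (1 + \<beta>) powr (2 * B)"
  proof -
    have "(1 + norm \<xi>) powr (2 * s) * (1 + \<bar>\<tau> + (norm \<xi>)\<^sup>2\<bar>) powr (2 * b)
       \<le> (K powr (2 * s) * (1 + r) powr (- 2 * s)) * ((K + norm k) powr (2 * B) * ((1 + \<beta>) powr (2 * B) * (1 + r) powr (4 * B)))"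
      using sp tp unfolding tp2 by (intro mult_mono) auto
    also have "\<dots> = (K powr (2 * s) * (K + norm k) powr (2 * B)) * (1 + r) powr (- 2 * s + 4 * B) * (1 + \<beta>) powr (2 * B)"
      unfolding powr_add[of "1 + r" "- 2 * s" "4 * B"] by (simp add: mult_ac)
    finally show ?thesis .
  qed
  have "(1 + norm \<xi>) powr (2 * s) * (1 + \<bar>\<tau> + (norm \<xi>)\<^sup>2\<bar>) powr (2 * b)
     \<le> ((K powr (2 * s) * (K + norm k) powr (2 * B)) * exp ((- 2 * s + 4 * B)\<^sup>2 / 2) * exp ((2 * B)\<^sup>2 / 2)) * exp (r\<^sup>2 / 2 + \<beta>\<^sup>2 / 2)"
    by (rule weight_to_exp[OF main]) (use r0 b0 s B0 in auto)
  also have "r\<^sup>2 / 2 + \<beta>\<^sup>2 / 2 = (norm (\<xi> - k))\<^sup>2 / (2 * 1) + (\<tau> - - (norm k)\<^sup>2)\<^sup>2 / (2 * K\<^sup>2)"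
    unfolding r_def \<beta>_def using K0 by (simp add: power_divide power2_abs)
  finally show ?thesis .
qed

lemma growth_contra:
  fixes A D p q :: real
  assumes A: "A > 0" and D: "D \<ge> 0" and pq: "p > q" and H: "\<And>X. X \<ge> 1 \<Longrightarrow> A * X powr p \<le> D * X powr q"
  shows False
proof -
  define Y where "Y = (D / A + 1) powr (1 / (p - q))"
  define X where "X = max 1 Y"
  have X1: "X \<ge> 1" unfolding X_def by simp
  have DA: "D / A + 1 > 0" using A D by (simp add: add_nonneg_pos)
  have Y0: "Y > 0" unfolding Y_def using DA by simp
  have "D / A + 1 = Y powr (p - q)"
    unfolding Y_def using DA pq by (simp add: powr_powr)
  also have "\<dots> \<le> X powr (p - q)" unfolding X_def using pq Y0 by (intro powr_mono2) auto
  finally have h: "D / A + 1 \<le> X powr (p - q)" .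
  have "D * X powr q < (D + A) * X powr q" using A X1 by simp
  also have "\<dots> = A * ((D / A + 1) * X powr q)" using A by (simp add: field_simps)
  also have "\<dots> \<le> A * (X powr (p - q) * X powr q)"
    using h A X1 by (intro mult_left_mono mult_right_mono) auto
  also have "\<dots> = A * X powr p" by (simp add: powr_add[symmetric])
  finally show False using H[OF X1] by simp
qed

lemma family_contra:
  fixes s b C A1 D1 p q :: real
  assumes H: "\<forall>f g h :: (real^'n) \<times> real \<Rightarrow> complex.
            admissible s b f \<longrightarrow> admissible s b g \<longrightarrow> admissible s b h \<longrightarrow>
            Xsb_sq s (-b) (\<lambda>z. f z * cnj (g z) * h z)
              \<le> ennreal (C\<^sup>2) * Xsb_sq s b f * Xsb_sq s b g * Xsb_sq s b h"
    and fam: "\<And>X. X \<ge> 1 \<Longrightarrow> \<exists>a c (k::real^'n) w. a > 0 \<and> c > 0 \<and> Xsb_sq s b (gs a c k w) \<le> ennreal (D1 * X powr q)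
              \<and> ennreal (A1 * X powr p) \<le> Xsb_sq s (-b) (gs (3 * a) (3 * c) k w)"
    and A1: "A1 > 0" and D1: "D1 \<ge> 0" and pq: "p > 3 * q"
  shows False
proof (rule growth_contra[OF A1 _ pq])
  show "0 \<le> C\<^sup>2 * D1 ^ 3" using D1 by simp
  fix X :: real assume X: "X \<ge> 1"
  obtain a c w and k :: "real^'n" where a: "a > 0" and c: "c > 0"
    and up: "Xsb_sq s b (gs a c k w) \<le> ennreal (D1 * X powr q)"
    and lo: "ennreal (A1 * X powr p) \<le> Xsb_sq s (-b) (gs (3 * a) (3 * c) k w)"
    using fam[OF X] by blast
  define f where "f = gs a c k w"
  have adm: "admissible s b f"
    unfolding admissible_def f_def
  proof (intro conjI)
    show "integrable lborel (gs a c k w)" by (rule gs_integrable[OF a c])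
    show "\<exists>M. \<forall>z. cmod (gs a c k w z) \<le> M" using gs_bounded[of a c k w] a c by auto
    show "Xsb_sq s b (gs a c k w) < \<infinity>" using up by (simp add: le_less_trans)
  qed
  have cube: "(\<lambda>z. f z * cnj (f z) * f z) = gs (3 * a) (3 * c) k w"
    unfolding f_def by (rule ext) (rule gs_cube)
  have "ennreal (A1 * X powr p) \<le> ennreal (C\<^sup>2) * Xsb_sq s b f * Xsb_sq s b f * Xsb_sq s b f"
  proof -
    have "Xsb_sq s (-b) (\<lambda>z. f z * cnj (f z) * f z) \<le> ennreal (C\<^sup>2) * Xsb_sq s b f * Xsb_sq s b f * Xsb_sq s b f"
      using H adm by blast
    then show ?thesis using lo unfolding cube by (rule order_trans[rotated])
  qed
  also have "\<dots> \<le> ennreal (C\<^sup>2) * ennreal (D1 * X powr q) * ennreal (D1 * X powr q) * ennreal (D1 * X powr q)"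
    using up unfolding f_def by (intro mult_mono) auto
  also have "\<dots> = ennreal (C\<^sup>2 * D1 ^ 3 * X powr (3 * q))"
  proof -
    have "X powr (3 * q) = X powr q * X powr q * X powr q"
      by (simp add: powr_add[symmetric])
    then show ?thesis using D1 X by (simp add: ennreal_mult[symmetric] power3_eq_cube mult_ac)
  qed
  finally have "ennreal (A1 * X powr p) \<le> ennreal (C\<^sup>2 * D1 ^ 3 * X powr (3 * q))" .
  then show "A1 * X powr p \<le> C\<^sup>2 * D1 ^ 3 * X powr (3 * q)"
    using D1 X by (subst (asm) ennreal_le_iff) auto
qed

lemma upper_const:
  fixes \<alpha> \<gamma> Q :: real
  assumes a: "\<alpha> > 0" and g: "\<gamma> > 0"
  shows "(2 * pi / \<alpha>\<^sup>2) ^ m * (2 * pi / \<gamma>\<^sup>2) * Q * (sqrt (2 * pi * \<alpha>\<^sup>2) ^ m * sqrt (2 * pi * \<gamma>\<^sup>2))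
       = (2 * pi * sqrt (2 * pi)) ^ (m + 1) * Q / (\<alpha> ^ m * \<gamma>)"
proof -
  define \<kappa> where "\<kappa> = 2 * pi * sqrt (2 * pi)"
  have s1: "sqrt (2 * pi * \<alpha>\<^sup>2) = sqrt (2 * pi) * \<alpha>" using a by (simp add: real_sqrt_mult)
  have s2: "sqrt (2 * pi * \<gamma>\<^sup>2) = sqrt (2 * pi) * \<gamma>" using g by (simp add: real_sqrt_mult)
  have e1: "(2 * pi / \<alpha>\<^sup>2) * (sqrt (2 * pi) * \<alpha>) = \<kappa> / \<alpha>" unfolding \<kappa>_def using a by (simp add: power2_eq_square)
  have e2: "(2 * pi / \<gamma>\<^sup>2) * (sqrt (2 * pi) * \<gamma>) = \<kappa> / \<gamma>" unfolding \<kappa>_def using g by (simp add: power2_eq_square)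
  have "(2 * pi / \<alpha>\<^sup>2) ^ m * (2 * pi / \<gamma>\<^sup>2) * Q * (sqrt (2 * pi * \<alpha>\<^sup>2) ^ m * sqrt (2 * pi * \<gamma>\<^sup>2))
      = ((2 * pi / \<alpha>\<^sup>2) * (sqrt (2 * pi) * \<alpha>)) ^ m * ((2 * pi / \<gamma>\<^sup>2) * (sqrt (2 * pi) * \<gamma>)) * Q"
    unfolding s1 s2 power_mult_distrib by (simp only: mult_ac)
  also have "\<dots> = (\<kappa> / \<alpha>) ^ m * (\<kappa> / \<gamma>) * Q" unfolding e1 e2 ..
  also have "\<dots> = \<kappa> ^ (m + 1) * Q / (\<alpha> ^ m * \<gamma>)" by (simp add: power_divide)
  finally show ?thesis unfolding \<kappa>_def .
qed

lemma lower_const: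
  fixes \<alpha> \<gamma> L :: real
  assumes a: "\<alpha> > 0" and g: "\<gamma> > 0"
  shows "(2 * pi / (3 * \<alpha>\<^sup>2)) ^ m * (2 * pi / (3 * \<gamma>\<^sup>2)) * L * ((\<alpha> / 2) ^ m * (\<gamma> / 2))
       = (pi / 3) ^ (m + 1) * L / (\<alpha> ^ m * \<gamma>)"
proof -
  have e1: "(2 * pi / (3 * \<alpha>\<^sup>2)) * (\<alpha> / 2) = (pi / 3) / \<alpha>" using a by (simp add: power2_eq_square)
  have e2: "(2 * pi / (3 * \<gamma>\<^sup>2)) * (\<gamma> / 2) = (pi / 3) / \<gamma>" using g by (simp add: power2_eq_square)
  have "(2 * pi / (3 * \<alpha>\<^sup>2)) ^ m * (2 * pi / (3 * \<gamma>\<^sup>2)) * L * ((\<alpha> / 2) ^ m * (\<gamma> / 2))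
      = ((2 * pi / (3 * \<alpha>\<^sup>2)) * (\<alpha> / 2)) ^ m * ((2 * pi / (3 * \<gamma>\<^sup>2)) * (\<gamma> / 2)) * L"
    unfolding power_mult_distrib by (simp only: mult_ac)
  also have "\<dots> = (pi / 3 / \<alpha>) ^ m * (pi / 3 / \<gamma>) * L" unfolding e1 e2 ..
  also have "\<dots> = (pi / 3) ^ (m + 1) * L / (\<alpha> ^ m * \<gamma>)" by (simp add: power_divide mult_ac)
  finally show ?thesis .
qed

lemma powr_collect:
  fixes N :: real
  assumes N: "N > 0"
  shows "N powr x * (N\<^sup>2) powr y / (N ^ m * N\<^sup>2) = N powr (x + 2 * y - real m - 2)"
proof -
  have h1: "(N\<^sup>2) powr y = N powr (2 * y)"
  proof -
    have e: "N powr 2 = N\<^sup>2" using N by (simp add: powr_realpow)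
    have "(N powr 2) powr y = N powr (2 * y)" by (rule powr_powr)
    then show ?thesis unfolding e .
  qed
  have h2: "N ^ m * N\<^sup>2 = N powr (real m + 2)"
    using N by (simp add: powr_add powr_realpow)
  show ?thesis unfolding h1 h2 by (simp add: powr_add[symmetric] powr_diff[symmetric] algebra_simps)
qed

lemma caseA_final:
  fixes s b C :: real
  assumes s0: "s \<ge> 0" and sle: "s \<le> real CARD('n) / 2 - 1" and bh: "b < 1/2"
    and H: "\<forall>f g h :: (real^'n) \<times> real \<Rightarrow> complex.
            admissible s b f \<longrightarrow> admissible s b g \<longrightarrow> admissible s b h \<longrightarrow>
            Xsb_sq s (-b) (\<lambda>z. f z * cnj (g z) * h z)
              \<le> ennreal (C\<^sup>2) * Xsb_sq s b f * Xsb_sq s b g * Xsb_sq s b h"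
  shows False
proof -
  define n where "n = CARD('n)"
  define B where "B = max b 0"
  define E where "E = exp ((2 * s + 4 * B)\<^sup>2 / 2) * exp ((2 * B)\<^sup>2 / 2)"
  define \<kappa> where "\<kappa> = 2 * pi * sqrt (2 * pi)"
  define D1 where "D1 = \<kappa> ^ (n + 1) * E"
  define q where "q = 2 * s + 2 * (2 * B) - real n - 2"
  define A1 where "A1 = (pi / 3) ^ (n + 1) * ((1 / 2) powr (2 * s) * cb (real n + 2) b * exp (- real n / 3) * exp (- 1 / 3))"
  define p where "p = 2 * s + 2 * (- 2 * b) - real n - 2"
  have A1: "A1 > 0" unfolding A1_def using cb_pos[of "real n + 2" b] by simp
  have D1: "D1 \<ge> 0" unfolding D1_def E_def \<kappa>_def by simp
  have pq: "p > 3 * q"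
  proof -
    have "4 * s \<le> 2 * real n - 4" using sle unfolding n_def by simp
    moreover have "4 * b + 12 * B < 8" unfolding B_def using bh by (cases "b \<ge> 0") auto
    moreover have "3 * q = 6 * s + 12 * B - 3 * real n - 6" unfolding q_def by (simp add: algebra_simps)
    moreover have "p = 2 * s - 4 * b - real n - 2" unfolding p_def by (simp add: algebra_simps)
    ultimately show ?thesis by linarith
  qed
  show False
  proof (rule family_contra[OF H _ A1 D1 pq])
    fix N :: real assume N: "N \<ge> 1"
    have N0: "N > 0" using N by simp
    define Q where "Q = (N powr (2 * s) * (N\<^sup>2) powr (2 * B)) * exp ((2 * s + 4 * B)\<^sup>2 / 2) * exp ((2 * B)\<^sup>2 / 2)"
    have Q0: "Q \<ge> 0" unfolding Q_def by simp
    have up0: "Xsb_sq s b (gs (N\<^sup>2) ((N\<^sup>2)\<^sup>2) (0::real^'n) 0) \<le> ennreal ((2 * pi / N\<^sup>2) ^ CARD('n) * (2 * pi / (N\<^sup>2)\<^sup>2) * Q * (sqrt (2 * pi * N\<^sup>2) ^ CARD('n) * sqrt (2 * pi * (N\<^sup>2)\<^sup>2)))"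
      by (rule Xsb_upper) (use N0 Q0 in simp, use N0 in simp, use Q0 in simp, unfold Q_def B_def, rule caseA_up[OF N s0])
    have "(2 * pi / N\<^sup>2) ^ CARD('n) * (2 * pi / (N\<^sup>2)\<^sup>2) * Q * (sqrt (2 * pi * N\<^sup>2) ^ CARD('n) * sqrt (2 * pi * (N\<^sup>2)\<^sup>2))
        = \<kappa> ^ (n + 1) * Q / (N ^ n * N\<^sup>2)"
      unfolding \<kappa>_def n_def by (rule upper_const) (use N0 in simp)+
    also have "\<dots> = D1 * N powr q"
    proof -
      have "Q / (N ^ n * N\<^sup>2) = E * (N powr (2 * s) * (N\<^sup>2) powr (2 * B) / (N ^ n * N\<^sup>2))"
        unfolding Q_def E_def by (simp add: mult_ac)
      also have "\<dots> = E * N powr q" unfolding q_def powr_collect[OF N0] ..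
      finally have qq: "Q / (N ^ n * N\<^sup>2) = E * N powr q" .
      have "\<kappa> ^ (n + 1) * Q / (N ^ n * N\<^sup>2) = \<kappa> ^ (n + 1) * (Q / (N ^ n * N\<^sup>2))" by simp
      also have "\<dots> = D1 * N powr q" unfolding qq D1_def by (simp add: mult_ac)
      finally show ?thesis .
    qed
    finally have up: "Xsb_sq s b (gs (N\<^sup>2) ((N\<^sup>2)\<^sup>2) (0::real^'n) 0) \<le> ennreal (D1 * N powr q)" using up0 by simp
    define L where "L = (1 / 2) powr (2 * s) * N powr (2 * s) * (cb (real CARD('n) + 2) b * (N\<^sup>2) powr (- 2 * b)) * exp (- real CARD('n) / 3) * exp (- 1 / 3)"
    have L0: "L \<ge> 0" unfolding L_def using cb_pos[of "real CARD('n) + 2" b] by simp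
    have lo0: "ennreal ((2 * pi / (3 * N\<^sup>2)) ^ CARD('n) * (2 * pi / (3 * (N\<^sup>2)\<^sup>2)) * L * ((N / 2) ^ CARD('n) * (N\<^sup>2 / 2)))
        \<le> Xsb_sq s (- b) (gs (3 * N\<^sup>2) (3 * (N\<^sup>2)\<^sup>2) (0::real^'n) 0)"
      by (rule Xsb_lower) (use N0 L0 in simp, use N0 in simp, use N0 in simp, use N0 in simp, use L0 in simp, unfold L_def, rule caseA_low[OF N s0])
    have "(2 * pi / (3 * N\<^sup>2)) ^ CARD('n) * (2 * pi / (3 * (N\<^sup>2)\<^sup>2)) * L * ((N / 2) ^ CARD('n) * (N\<^sup>2 / 2))
        = (pi / 3) ^ (n + 1) * L / (N ^ n * N\<^sup>2)"
      unfolding n_def by (rule lower_const) (use N0 in simp)+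
    also have "\<dots> = A1 * N powr p"
    proof -
      have "N powr (2 * s) * (N\<^sup>2) powr (- 2 * b) / (N ^ n * N\<^sup>2) = N powr p"
        unfolding p_def powr_collect[OF N0] ..
      moreover have "(pi / 3) ^ (n + 1) * L / (N ^ n * N\<^sup>2)
          = A1 * (N powr (2 * s) * (N\<^sup>2) powr (- 2 * b) / (N ^ n * N\<^sup>2))"
        unfolding L_def A1_def n_def by (simp add: mult_ac)
      ultimately show ?thesis by simp
    qed
    finally have lo: "ennreal (A1 * N powr p) \<le> Xsb_sq s (- b) (gs (3 * N\<^sup>2) (3 * (N\<^sup>2)\<^sup>2) (0::real^'n) 0)" using lo0 by simp
    show "\<exists>a c (k::real^'n) w. a > 0 \<and> c > 0 \<and> Xsb_sq s b (gs a c k w) \<le> ennreal (D1 * N powr q)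
              \<and> ennreal (A1 * N powr p) \<le> Xsb_sq s (-b) (gs (3 * a) (3 * c) k w)"
      using up lo N0 by (intro exI[of _ "N\<^sup>2"] exI[of _ "(N\<^sup>2)\<^sup>2"] exI[of _ "0::real^'n"] exI[of _ 0]) simp
  qed
qed

lemma powr_exp_bound4:
  fixes r m :: real
  assumes r: "r \<ge> 0" and m: "m \<ge> 0"
  shows "(1 + r) powr m \<le> exp (m\<^sup>2) * exp (r\<^sup>2 / 4)"
proof -
  have "(1 + r) powr m \<le> (exp r) powr m"
    using r m by (intro powr_mono2) (auto simp: exp_ge_add_one_self add.commute)
  also have "\<dots> = exp (m * r)" by (simp add: powr_def mult.commute)
  also have "\<dots> \<le> exp (m\<^sup>2 + r\<^sup>2 / 4)"
  proof -
    have "0 \<le> (m - r / 2)\<^sup>2" by simp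
    then have "m * r \<le> m\<^sup>2 + r\<^sup>2 / 4" by (simp add: power2_eq_square algebra_simps)
    then show ?thesis by simp
  qed
  also have "\<dots> = exp (m\<^sup>2) * exp (r\<^sup>2 / 4)" by (simp add: exp_add)
  finally show ?thesis .
qed

lemma space_tail:
  fixes \<xi> k :: "real^'n" and K N s :: real
  assumes s: "s \<le> 0" and K: "K > 0" and N: "N > 0" and nk: "K \<le> norm k"
  shows "(1 + norm \<xi>) powr (2 * s) \<le> ((K / 2) powr (2 * s) + exp (- K\<^sup>2 / (16 * N\<^sup>2))) * exp ((norm (\<xi> - k) / N)\<^sup>2 / 4)"
proof (cases "norm (\<xi> - k) \<le> K / 2")
  case True
  have "K / 2 \<le> norm \<xi>"
  proof -
    have "norm k \<le> norm \<xi> + norm (\<xi> - k)" using norm_triangle_ineq4[of \<xi> "\<xi> - k"] by simp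
    then show ?thesis using True nk by linarith
  qed
  then have "K / 2 \<le> 1 + norm \<xi>" by simp
  then have "(1 + norm \<xi>) powr (2 * s) \<le> (K / 2) powr (2 * s)" using s K by (intro powr_mono2') auto
  also have "\<dots> \<le> ((K / 2) powr (2 * s) + exp (- K\<^sup>2 / (16 * N\<^sup>2))) * 1" by simp
  also have "\<dots> \<le> ((K / 2) powr (2 * s) + exp (- K\<^sup>2 / (16 * N\<^sup>2))) * exp ((norm (\<xi> - k) / N)\<^sup>2 / 4)"
    by (intro mult_left_mono) (auto intro: add_nonneg_nonneg)
  finally show ?thesis .
next
  case False
  have "(1 + norm \<xi>) powr (2 * s) \<le> 1"
    using powr_mono[of "2 * s" 0 "1 + norm \<xi>"] s by (auto split: if_splits)
  also have "1 \<le> exp (- K\<^sup>2 / (16 * N\<^sup>2)) * exp ((norm (\<xi> - k) / N)\<^sup>2 / 4)"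
  proof -
    have "K / 2 \<le> norm (\<xi> - k)" using False by simp
    then have "(K / 2)\<^sup>2 \<le> (norm (\<xi> - k))\<^sup>2" using K by (intro power_mono) auto
    then have "K\<^sup>2 / (16 * N\<^sup>2) \<le> (norm (\<xi> - k) / N)\<^sup>2 / 4" using N by (simp add: power_divide divide_simps)
    then have "0 \<le> - K\<^sup>2 / (16 * N\<^sup>2) + (norm (\<xi> - k) / N)\<^sup>2 / 4" by linarith
    then have "1 \<le> exp (- K\<^sup>2 / (16 * N\<^sup>2) + (norm (\<xi> - k) / N)\<^sup>2 / 4)" by (simp only: one_le_exp_iff)
    then show ?thesis by (simp only: exp_add)
  qed
  also have "\<dots> \<le> ((K / 2) powr (2 * s) + exp (- K\<^sup>2 / (16 * N\<^sup>2))) * exp ((norm (\<xi> - k) / N)\<^sup>2 / 4)"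
    by (intro mult_right_mono) auto
  finally show ?thesis .
qed


lemma caseB2_up:
  fixes \<xi> k :: "real^'n" and K N M s b \<tau> :: real
  assumes N: "N \<ge> 1" and M: "M \<ge> 1" and K: "K > 0" and s: "s \<le> 0" and nk1: "K \<le> norm k"
  defines "B \<equiv> max b 0"
  shows "(1 + norm \<xi>) powr (2 * s) * (1 + \<bar>\<tau> + (norm \<xi>)\<^sup>2\<bar>) powr (2 * b)
     \<le> ((((K / 2) powr (2 * s) + exp (- K\<^sup>2 / (16 * N\<^sup>2))) * (M + norm k * N + N\<^sup>2) powr (2 * B)) * exp ((4 * B)\<^sup>2) * exp ((2 * B)\<^sup>2 / 2))
        * exp ((norm (\<xi> - k))\<^sup>2 / (2 * N\<^sup>2) + (\<tau> - - (norm k)\<^sup>2)\<^sup>2 / (2 * M\<^sup>2))"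
proof -
  define r where "r = norm (\<xi> - k) / N"
  define \<beta> where "\<beta> = \<bar>\<tau> - - (norm k)\<^sup>2\<bar> / M"
  define S where "S = (K / 2) powr (2 * s) + exp (- K\<^sup>2 / (16 * N\<^sup>2))"
  define P where "P = M + norm k * N + N\<^sup>2"
  have N0: "N > 0" and M0: "M > 0" using N M by auto
  have r0: "r \<ge> 0" and b0: "\<beta> \<ge> 0" unfolding r_def \<beta>_def using N0 M0 by auto
  have nx: "norm (\<xi> - k) = N * r" unfolding r_def using N0 by simp
  have nt: "\<bar>\<tau> - - (norm k)\<^sup>2\<bar> = M * \<beta>" unfolding \<beta>_def using M0 by simp
  have B0: "B \<ge> 0" unfolding B_def by simp
  have S0: "S \<ge> 0" unfolding S_def by (intro add_nonneg_nonneg) auto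
  have P1: "1 \<le> P" unfolding P_def using M N0 by (simp add: add_increasing2)
  have sp: "(1 + norm \<xi>) powr (2 * s) \<le> S * exp (r\<^sup>2 / 4)"
    unfolding S_def r_def using space_tail[OF s K N0 nk1] .
  have tp: "(1 + \<bar>\<tau> + (norm \<xi>)\<^sup>2\<bar>) powr (2 * b) \<le> P powr (2 * B) * ((1 + \<beta>) * ((1 + r) * (1 + r))) powr (2 * B)"
    unfolding B_def
  proof (rule time_weight_up)
    have cs: "\<bar>k \<bullet> (\<xi> - k)\<bar> \<le> norm k * (N * r)" unfolding nx[symmetric] by (rule Cauchy_Schwarz_ineq2)
    have "1 + \<bar>\<tau> + (norm \<xi>)\<^sup>2\<bar> \<le> 1 + M * \<beta> + 2 * (norm k * (N * r)) + (N * r)\<^sup>2"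
      unfolding sq_expand[of \<tau> \<xi> k] nx nt[symmetric]
      using cs abs_triangle_ineq[of "\<tau> - - (norm k)\<^sup>2 + 2 * (k \<bullet> (\<xi> - k))" "(N * r)\<^sup>2"]
        abs_triangle_ineq[of "\<tau> - - (norm k)\<^sup>2" "2 * (k \<bullet> (\<xi> - k))"] by simp
    also have "\<dots> \<le> P * ((1 + \<beta>) * ((1 + r) * (1 + r)))"
    proof -
      have e: "P * ((1 + \<beta>) * ((1 + r) * (1 + r)))
          = P + P * \<beta> * ((1 + r) * (1 + r)) + 2 * P * r + P * r\<^sup>2"
        by (simp add: algebra_simps power2_eq_square)
      have "M * \<beta> \<le> P * \<beta> * ((1 + r) * (1 + r))"
      proof -
        have "M \<le> P" unfolding P_def using N0 by (simp add: add_increasing2)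
        then have "M * \<beta> \<le> P * \<beta>" using b0 by (simp add: mult_right_mono)
        also have "\<dots> \<le> P * \<beta> * ((1 + r) * (1 + r))"
        proof -
          have "1 \<le> (1 + r) * (1 + r)" using mult_mono[of 1 "1 + r" 1 "1 + r"] r0 by simp
          moreover have "0 \<le> P * \<beta>" using P1 b0 by simp
          ultimately show ?thesis by (metis mult_le_cancel_left1 mult_1_right mult_left_mono)
        qed
        finally show ?thesis .
      qed
      moreover have "norm k * (N * r) \<le> P * r"
      proof -
        have "norm k * N \<le> P" unfolding P_def using M0 by simp
        then show ?thesis using r0 by (simp add: mult_right_mono mult.assoc[symmetric])
      qed
      moreover have "(N * r)\<^sup>2 \<le> P * r\<^sup>2"
      proof -
        have "N\<^sup>2 \<le> P" unfolding P_def using M0 N0 by simp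
        then show ?thesis by (simp add: power_mult_distrib mult_right_mono)
      qed
      ultimately show ?thesis unfolding e using P1 by linarith
    qed
    finally show "1 + \<bar>\<tau> + (norm \<xi>)\<^sup>2\<bar> \<le> P * ((1 + \<beta>) * ((1 + r) * (1 + r)))" .
    show "1 \<le> P" by (rule P1)
    have h1: "1 \<le> 1 + r" using r0 by simp
    have h2: "1 \<le> (1 + r) * (1 + r)" using mult_mono[OF h1 h1] r0 by simp
    have h3: "1 \<le> 1 + \<beta>" using b0 by simp
    show "1 \<le> (1 + \<beta>) * ((1 + r) * (1 + r))" using mult_mono[OF h3 h2] b0 by simp
  qed
  have tp2: "((1 + \<beta>) * ((1 + r) * (1 + r))) powr (2 * B) = (1 + \<beta>) powr (2 * B) * (1 + r) powr (4 * B)"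
    using r0 b0 by (simp add: powr_mult powr_add[symmetric])
  have e1: "(1 + r) powr (4 * B) \<le> exp ((4 * B)\<^sup>2) * exp (r\<^sup>2 / 4)" using powr_exp_bound4[OF r0, of "4 * B"] B0 by simp
  have e2: "(1 + \<beta>) powr (2 * B) \<le> exp ((2 * B)\<^sup>2 / 2) * exp (\<beta>\<^sup>2 / 2)" using powr_exp_bound[OF b0, of "2 * B"] B0 by simp
  have "(1 + norm \<xi>) powr (2 * s) * (1 + \<bar>\<tau> + (norm \<xi>)\<^sup>2\<bar>) powr (2 * b)
     \<le> (S * exp (r\<^sup>2 / 4)) * (P powr (2 * B) * ((exp ((2 * B)\<^sup>2 / 2) * exp (\<beta>\<^sup>2 / 2)) * (exp ((4 * B)\<^sup>2) * exp (r\<^sup>2 / 4))))"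
  proof -
    have "(1 + \<bar>\<tau> + (norm \<xi>)\<^sup>2\<bar>) powr (2 * b) \<le> P powr (2 * B) * ((exp ((2 * B)\<^sup>2 / 2) * exp (\<beta>\<^sup>2 / 2)) * (exp ((4 * B)\<^sup>2) * exp (r\<^sup>2 / 4)))"
      using tp unfolding tp2 by (rule order_trans) (intro mult_left_mono mult_mono e1 e2, auto)
    then show ?thesis using sp S0 by (intro mult_mono) auto
  qed
  also have "\<dots> = ((S * P powr (2 * B)) * exp ((4 * B)\<^sup>2) * exp ((2 * B)\<^sup>2 / 2)) * exp (r\<^sup>2 / 2 + \<beta>\<^sup>2 / 2)"
  proof -
    have "exp (r\<^sup>2 / 2 + \<beta>\<^sup>2 / 2) = exp (r\<^sup>2 / 4) * exp (r\<^sup>2 / 4) * exp (\<beta>\<^sup>2 / 2)"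
      by (simp add: exp_add[symmetric])
    then show ?thesis by (simp add: mult_ac)
  qed
  also have "r\<^sup>2 / 2 + \<beta>\<^sup>2 / 2 = (norm (\<xi> - k))\<^sup>2 / (2 * N\<^sup>2) + (\<tau> - - (norm k)\<^sup>2)\<^sup>2 / (2 * M\<^sup>2)"
    unfolding r_def \<beta>_def using N0 M0 by (simp add: power_divide power2_abs)
  finally show ?thesis unfolding S_def P_def .
qed


lemma caseB2_low:
  fixes \<xi> k :: "real^'n" and K N s b \<tau> :: real
  assumes N: "N \<ge> 1" and KN: "N \<le> K" and s: "s \<le> 0" and hk: "\<forall>i\<in>Basis. 0 \<le> k \<bullet> i" and nk: "norm k \<le> CARD('n) * K"
    and box: "\<forall>i\<in>Basis. k \<bullet> i + N / 2 \<le> \<xi> \<bullet> i \<and> \<xi> \<bullet> i \<le> k \<bullet> i + N"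
    and t1: "- (norm k)\<^sup>2 + (K * N) / 2 \<le> \<tau>" and t2: "\<tau> \<le> - (norm k)\<^sup>2 + K * N"
  shows "((1 + 2 * real CARD('n)) * K) powr (2 * s) * (cb (2 + 2 * (real CARD('n))\<^sup>2 + real CARD('n)) b * (K * N) powr (- 2 * b))
           * exp (- real CARD('n) / 3) * exp (- 1 / 3)
     \<le> (1 + norm \<xi>) powr (2 * s) * (1 + \<bar>\<tau> + (norm \<xi>)\<^sup>2\<bar>) powr (2 * - b)
        * exp (- (norm (\<xi> - k))\<^sup>2 / (3 * N\<^sup>2) - (\<tau> - - (norm k)\<^sup>2)\<^sup>2 / (3 * (K * N)\<^sup>2))"
proof -
  define n where "n = real CARD('n)"
  define M where "M = K * N"
  have n1: "n \<ge> 1" unfolding n_def by simp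
  have N0: "N > 0" using N by simp
  have K1: "K \<ge> 1" using N KN by simp
  have K0: "K > 0" using K1 by simp
  have M1: "M \<ge> 1" unfolding M_def using K1 N mult_mono[OF K1 N] by simp
  have M0: "M > 0" using M1 by simp
  have NNM: "N * N \<le> M" unfolding M_def using KN N0 by (simp add: mult_right_mono)
  define \<eta> where "\<eta> = \<xi> - k"
  have eb: "\<forall>i\<in>Basis. N / 2 \<le> \<eta> \<bullet> i \<and> \<eta> \<bullet> i \<le> N" using box unfolding \<eta>_def by (auto simp: inner_diff_left)
  have eb2: "\<forall>i\<in>Basis. 0 \<le> \<eta> \<bullet> i \<and> \<eta> \<bullet> i \<le> N"
  proof (intro ballI)
    fix i :: "real^'n" assume "i \<in> Basis"
    then have "N / 2 \<le> \<eta> \<bullet> i \<and> \<eta> \<bullet> i \<le> N" using eb by blast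
    then show "0 \<le> \<eta> \<bullet> i \<and> \<eta> \<bullet> i \<le> N" using N0 by linarith
  qed
  have nsq: "(norm \<eta>)\<^sup>2 \<le> n * N\<^sup>2" using normsq_box_upper[OF eb2] unfolding n_def by simp
  have nle: "norm \<eta> \<le> n * N"
  proof -
    have "n \<le> n * n" using n1 by simp
    then have "n * N\<^sup>2 \<le> (n * n) * N\<^sup>2" by (rule mult_right_mono) simp
    also have "(n * n) * N\<^sup>2 = (n * N)\<^sup>2" by (simp add: power2_eq_square)
    finally have "n * N\<^sup>2 \<le> (n * N)\<^sup>2" .
    then have "(norm \<eta>)\<^sup>2 \<le> (n * N)\<^sup>2" using nsq by linarith
    then show ?thesis by (rule power2_le_imp_le) (use n1 N0 in simp)
  qed
  have kn: "0 \<le> k \<bullet> \<eta>"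
  proof -
    have "k \<bullet> \<eta> = (\<Sum>i\<in>Basis. (k \<bullet> i) * (\<eta> \<bullet> i))" by (rule euclidean_inner)
    also have "\<dots> \<ge> 0"
    proof (intro sum_nonneg)
      fix i :: "real^'n" assume i: "i \<in> Basis"
      have "0 \<le> \<eta> \<bullet> i" using eb2 i by blast
      then show "0 \<le> k \<bullet> i * (\<eta> \<bullet> i)" using hk i by simp
    qed
    finally show ?thesis .
  qed
  have kn2: "k \<bullet> \<eta> \<le> n * n * M"
  proof -
    have "k \<bullet> \<eta> \<le> norm k * norm \<eta>" using Cauchy_Schwarz_ineq2[of k \<eta>] by simp
    also have "\<dots> \<le> (n * K) * (n * N)" using nk nle K0 unfolding n_def by (intro mult_mono) auto
    also have "\<dots> = n * n * M" unfolding M_def by (simp add: mult_ac)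
    finally show ?thesis .
  qed
  have sp: "((1 + 2 * n) * K) powr (2 * s) \<le> (1 + norm \<xi>) powr (2 * s)"
  proof -
    have "norm \<xi> \<le> norm k + norm \<eta>" unfolding \<eta>_def using norm_triangle_ineq[of k "\<xi> - k"] by simp
    moreover have "n * N \<le> n * K" using n1 KN by simp
    moreover have "(1 + 2 * n) * K = K + 2 * (n * K)" by (simp add: algebra_simps)
    moreover have "norm k \<le> n * K" using nk unfolding n_def .
    ultimately have "1 + norm \<xi> \<le> (1 + 2 * n) * K" using nle K1 by linarith
    moreover have "0 < 1 + norm \<xi>" by (simp add: add_pos_nonneg)
    ultimately show ?thesis using s by (intro powr_mono2') auto
  qed
  have tp: "cb (2 + 2 * n\<^sup>2 + n) b * M powr (- 2 * b) \<le> (1 + \<bar>\<tau> + (norm \<xi>)\<^sup>2\<bar>) powr (2 * - b)"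
  proof -
    have ex: "\<tau> + (norm \<xi>)\<^sup>2 = (\<tau> - - (norm k)\<^sup>2) + 2 * (k \<bullet> \<eta>) + (norm \<eta>)\<^sup>2"
      unfolding \<eta>_def by (rule sq_expand)
    have "cb (2 + 2 * n\<^sup>2 + n) b * M powr (- 2 * b) \<le> (1 + \<bar>\<tau> + (norm \<xi>)\<^sup>2\<bar>) powr (- 2 * b)"
    proof (rule time_weight_low)
      show "M > 0" by (rule M0)
      show "1 \<le> 2 + 2 * n\<^sup>2 + n" using n1 by simp
      show "M / 2 \<le> \<tau> + (norm \<xi>)\<^sup>2" unfolding ex using t1 kn zero_le_power2[of "norm \<eta>"] unfolding M_def by linarith
      have nN: "n * N\<^sup>2 \<le> n * M" using NNM n1 by (simp add: power2_eq_square)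
      have "1 + (\<tau> + (norm \<xi>)\<^sup>2) \<le> 1 + M + 2 * (n * n * M) + n * M"
        unfolding ex using t2 kn2 nsq nN unfolding M_def by linarith
      also have "\<dots> \<le> (2 + 2 * n\<^sup>2 + n) * M"
        using M1 by (simp add: algebra_simps power2_eq_square)
      finally show "1 + (\<tau> + (norm \<xi>)\<^sup>2) \<le> (2 + 2 * n\<^sup>2 + n) * M" .
    qed
    then show ?thesis by simp
  qed
  have ex: "exp (- n / 3) * exp (- 1 / 3) \<le> exp (- (norm (\<xi> - k))\<^sup>2 / (3 * N\<^sup>2) - (\<tau> - - (norm k)\<^sup>2)\<^sup>2 / (3 * (K * N)\<^sup>2))"
  proof -
    have a1: "(norm \<eta>)\<^sup>2 / (3 * N\<^sup>2) \<le> n / 3" using nsq N0 by (simp add: divide_simps)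
    have "(\<tau> - - (norm k)\<^sup>2)\<^sup>2 \<le> M\<^sup>2" using t1 t2 M0 unfolding M_def by (intro power_mono) auto
    then have "(\<tau> - - (norm k)\<^sup>2)\<^sup>2 / (3 * (K * N)\<^sup>2) \<le> M\<^sup>2 / (3 * (K * N)\<^sup>2)" by (rule divide_right_mono) simp
    also have "M\<^sup>2 / (3 * (K * N)\<^sup>2) = 1 / 3" using K0 N0 unfolding M_def by simp
    finally have a2: "(\<tau> - - (norm k)\<^sup>2)\<^sup>2 / (3 * (K * N)\<^sup>2) \<le> 1 / 3" .
    have "exp (- n / 3) * exp (- 1 / 3) = exp (- n / 3 - 1 / 3)"
    proof -
      have "- n / 3 - 1 / 3 = - n / 3 + (- 1 / 3)" by simp
      then show ?thesis by (simp only: exp_add)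
    qed
    also have "\<dots> \<le> exp (- (norm (\<xi> - k))\<^sup>2 / (3 * N\<^sup>2) - (\<tau> - - (norm k)\<^sup>2)\<^sup>2 / (3 * (K * N)\<^sup>2))"
      using a1 a2 unfolding \<eta>_def by simp
    finally show ?thesis .
  qed
  have "0 < 2 + 2 * n\<^sup>2 + n" using n1 by (simp add: add_pos_nonneg)
  then have cb0: "0 \<le> cb (2 + 2 * n\<^sup>2 + n) b" using cb_pos[of "2 + 2 * n\<^sup>2 + n" b] by simp
  have "((1 + 2 * n) * K) powr (2 * s) * (cb (2 + 2 * n\<^sup>2 + n) b * M powr (- 2 * b)) * (exp (- n / 3) * exp (- 1 / 3))
     \<le> (1 + norm \<xi>) powr (2 * s) * (1 + \<bar>\<tau> + (norm \<xi>)\<^sup>2\<bar>) powr (2 * - b)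
        * exp (- (norm (\<xi> - k))\<^sup>2 / (3 * N\<^sup>2) - (\<tau> - - (norm k)\<^sup>2)\<^sup>2 / (3 * (K * N)\<^sup>2))"
    using sp tp ex cb0 by (intro mult_mono) auto
  then show ?thesis unfolding n_def M_def by (simp add: mult.assoc)
qed

lemma exp_poly_bound:
  fixes y m :: real
  assumes y: "y \<ge> 1" and m: "m \<ge> 0"
  shows "exp (- y\<^sup>2 / 16) \<le> exp (4 * m\<^sup>2) * y powr (- m)"
proof -
  have y0: "y > 0" using y by simp
  have "y powr m = exp (m * ln y)" using y0 by (simp add: powr_def mult.commute)
  also have "\<dots> \<le> exp (m * y)"
  proof -
    have "ln y \<le> y" using ln_le_minus_one[OF y0] by simp
    then show ?thesis using m by (simp add: mult_left_mono)
  qed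
  also have "\<dots> \<le> exp (4 * m\<^sup>2 + y\<^sup>2 / 16)"
  proof -
    have "0 \<le> (2 * m - y / 4)\<^sup>2" by simp
    then have "m * y \<le> 4 * m\<^sup>2 + y\<^sup>2 / 16" by (simp add: power2_eq_square algebra_simps)
    then show ?thesis by simp
  qed
  finally have h: "y powr m \<le> exp (4 * m\<^sup>2) * exp (y\<^sup>2 / 16)" by (simp add: exp_add)
  have "exp (- y\<^sup>2 / 16) = (y powr m * exp (- y\<^sup>2 / 16)) * y powr (- m)"
    using y0 by (simp add: powr_minus)
  also have "\<dots> \<le> (exp (4 * m\<^sup>2) * exp (y\<^sup>2 / 16) * exp (- y\<^sup>2 / 16)) * y powr (- m)"
    using h by (intro mult_right_mono) auto
  also have "\<dots> = exp (4 * m\<^sup>2) * y powr (- m)" by (simp add: exp_minus)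
  finally show ?thesis .
qed

lemma caseB2_final:
  fixes s b C :: real
  assumes n2: "CARD('n) \<ge> 2" and s0: "s \<le> 0" and bh: "b < 1/2"
    and H: "\<forall>f g h :: (real^'n) \<times> real \<Rightarrow> complex.
            admissible s b f \<longrightarrow> admissible s b g \<longrightarrow> admissible s b h \<longrightarrow>
            Xsb_sq s (-b) (\<lambda>z. f z * cnj (g z) * h z)
              \<le> ennreal (C\<^sup>2) * Xsb_sq s b f * Xsb_sq s b g * Xsb_sq s b h"
  shows False
proof -
  define n where "n = CARD('n)"
  define nr where "nr = real n"
  have n1: "nr \<ge> 1" and n2': "nr \<ge> 2" unfolding nr_def n_def using n2 by auto
  define B where "B = max b 0"
  define g where "g = 2 - 2 * b - 6 * B"
  define f1 where "f1 = 2 * nr + 2 * g - 4 * s"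
  have g2: "g > -2" unfolding g_def B_def using bh by (cases "b \<ge> 0") auto
  have f1: "f1 > 0" unfolding f1_def using g2 n2' s0 by linarith
  define \<delta> where "\<delta> = f1 / (2 * (\<bar>g - 4 * s\<bar> + 1))"
  have \<delta>0: "\<delta> > 0" unfolding \<delta>_def using f1 by (simp add: add_nonneg_pos)
  have \<delta>b: "\<delta> * \<bar>g - 4 * s\<bar> \<le> f1 / 2"
  proof -
    have "\<delta> * \<bar>g - 4 * s\<bar> \<le> \<delta> * (\<bar>g - 4 * s\<bar> + 1)" using \<delta>0 by simp
    also have "\<dots> = f1 / 2"
    proof -
      have "\<bar>g - 4 * s\<bar> + 1 \<noteq> 0" by (simp add: add_nonneg_pos)
      then show ?thesis unfolding \<delta>_def by (simp add: field_simps)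
    qed
    finally show ?thesis .
  qed
  define \<kappa> where "\<kappa> = 1 + \<delta>"
  have \<kappa>1: "\<kappa> \<ge> 1" unfolding \<kappa>_def using \<delta>0 by simp
  define m where "m = - 2 * s * \<kappa> / \<delta>"
  have m0: "m \<ge> 0"
  proof -
    have "0 \<le> - 2 * s" using s0 by simp
    then have "0 \<le> (- 2 * s) * \<kappa>" using \<kappa>1 by (intro mult_nonneg_nonneg[of "- 2 * s" \<kappa>]) auto
    then show ?thesis unfolding m_def using \<delta>0 by (rule divide_nonneg_pos)
  qed
  define Ce where "Ce = exp (4 * m\<^sup>2)"
  define E where "E = exp ((4 * B)\<^sup>2) * exp ((2 * B)\<^sup>2 / 2)"
  define \<kappa>0 where "\<kappa>0 = 2 * pi * sqrt (2 * pi)"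
  define D1 where "D1 = \<kappa>0 ^ (n + 1) * (((1 / 2) powr (2 * s) + Ce) * (2 + sqrt nr) powr (2 * B) * E)"
  define q where "q = 2 * s * \<kappa> + 2 * B * (\<kappa> + 1) - nr - \<kappa> - 1"
  define P where "P = 2 + 2 * nr\<^sup>2 + nr"
  define A1 where "A1 = (pi / 3) ^ (n + 1) * ((1 + 2 * nr) powr (2 * s) * cb P b * exp (- nr / 3) * exp (- 1 / 3))"
  define p where "p = 2 * s * \<kappa> - 2 * b * (\<kappa> + 1) - nr - \<kappa> - 1"
  have P0: "P > 0" unfolding P_def using n1 by (simp add: add_pos_nonneg)
  have A1: "A1 > 0" unfolding A1_def using cb_pos[OF P0, of b] n1 by simp
  have D1: "D1 \<ge> 0" unfolding D1_def E_def \<kappa>0_def Ce_def by (intro mult_nonneg_nonneg add_nonneg_nonneg) auto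
  have pq: "p > 3 * q"
  proof -
    have "p - 3 * q = f1 + \<delta> * (g - 4 * s)"
      unfolding p_def q_def f1_def g_def \<kappa>_def by (simp add: algebra_simps)
    moreover have "- (\<delta> * \<bar>g - 4 * s\<bar>) \<le> \<delta> * (g - 4 * s)"
    proof -
      have "- \<bar>g - 4 * s\<bar> \<le> g - 4 * s" by simp
      then have "\<delta> * (- \<bar>g - 4 * s\<bar>) \<le> \<delta> * (g - 4 * s)" using \<delta>0 by (intro mult_left_mono) auto
      then show ?thesis by simp
    qed
    ultimately show ?thesis using \<delta>b f1 by linarith
  qed
  show False
  proof (rule family_contra[OF H _ A1 D1 pq])
    fix N :: real assume N: "N \<ge> 1"
    have N0: "N > 0" using N by simp
    define K where "K = N powr \<kappa>"
    have KN: "N \<le> K" unfolding K_def using powr_mono[OF \<kappa>1 N] N0 by simp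
    have K0: "K > 0" using KN N0 by simp
    have M1: "1 \<le> K * N" using mult_mono[OF order_trans[OF N KN] N] K0 by simp
    have KNp: "K * N = N powr (\<kappa> + 1)" unfolding K_def using N0 by (simp add: powr_add)
    have Kp: "K powr x = N powr (\<kappa> * x)" for x unfolding K_def by (simp add: powr_powr)
    have Nn: "N ^ n * (K * N) = N powr (nr + \<kappa> + 1)"
      unfolding KNp nr_def using N0 by (simp add: powr_realpow[symmetric] powr_add[symmetric] add.assoc)
    define k :: "real^'n" where "k = K *\<^sub>R One"
    have ki: "\<forall>i\<in>Basis. k \<bullet> i = K" unfolding k_def by simp
    have nk2: "(norm k)\<^sup>2 = nr * K\<^sup>2"
    proof -
      have "(norm k)\<^sup>2 = (\<Sum>i\<in>(Basis::(real^'n) set). (k \<bullet> i)\<^sup>2)" by (rule norm_sq_Basis)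
      also have "\<dots> = (\<Sum>i\<in>(Basis::(real^'n) set). K\<^sup>2)" using ki by simp
      also have "\<dots> = nr * K\<^sup>2" unfolding nr_def n_def by (simp add: card_Basis_vec)
      finally show ?thesis .
    qed
    have nk: "norm k = sqrt nr * K"
    proof -
      have "norm k = sqrt ((norm k)\<^sup>2)" by simp
      also have "\<dots> = sqrt nr * K" unfolding nk2 using K0 by (simp add: real_sqrt_mult)
      finally show ?thesis .
    qed
    have sq1: "1 \<le> sqrt nr" using n1 by simp
    have sq2: "sqrt nr \<le> nr"
    proof -
      have "sqrt nr * 1 \<le> sqrt nr * sqrt nr" using sq1 by (intro mult_left_mono) auto
      also have "\<dots> = nr" using n1 by simp
      finally show ?thesis by simp
    qed
    have nk1: "K \<le> norm k" unfolding nk using sq1 K0 by simp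
    have nkle: "norm k \<le> CARD('n) * K" unfolding nk using sq2 K0 unfolding nr_def n_def by (simp add: mult_right_mono)
    have hk: "\<forall>i\<in>Basis. 0 \<le> k \<bullet> i" using ki K0 by simp
    define Q where "Q = (((K / 2) powr (2 * s) + exp (- K\<^sup>2 / (16 * N\<^sup>2))) * (K * N + norm k * N + N\<^sup>2) powr (2 * B)) * exp ((4 * B)\<^sup>2) * exp ((2 * B)\<^sup>2 / 2)"
    have Q0: "Q \<ge> 0" unfolding Q_def by (intro mult_nonneg_nonneg add_nonneg_nonneg) auto
    have up0: "Xsb_sq s b (gs (N\<^sup>2) ((K * N)\<^sup>2) k (- (norm k)\<^sup>2)) \<le> ennreal ((2 * pi / N\<^sup>2) ^ CARD('n) * (2 * pi / (K * N)\<^sup>2) * Q * (sqrt (2 * pi * N\<^sup>2) ^ CARD('n) * sqrt (2 * pi * (K * N)\<^sup>2)))"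
      by (rule Xsb_upper) (use N0 in simp, use K0 N0 in simp, use Q0 in simp, unfold Q_def B_def, rule caseB2_up[OF N M1 K0 s0 nk1])
    have "(2 * pi / N\<^sup>2) ^ CARD('n) * (2 * pi / (K * N)\<^sup>2) * Q * (sqrt (2 * pi * N\<^sup>2) ^ CARD('n) * sqrt (2 * pi * (K * N)\<^sup>2))
        = \<kappa>0 ^ (n + 1) * Q / (N ^ n * (K * N))"
      unfolding \<kappa>0_def n_def by (rule upper_const) (use N0 K0 in simp)+
    also have "\<dots> \<le> D1 * N powr q"
    proof -
      have S: "(K / 2) powr (2 * s) + exp (- K\<^sup>2 / (16 * N\<^sup>2)) \<le> ((1 / 2) powr (2 * s) + Ce) * N powr (2 * s * \<kappa>)"
      proof -
        have a: "(K / 2) powr (2 * s) = (1 / 2) powr (2 * s) * N powr (2 * s * \<kappa>)"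
          using K0 Kp[of "2 * s"] by (simp add: powr_divide mult.commute)
        define y where "y = N powr \<delta>"
        have y1: "y \<ge> 1" unfolding y_def using N \<delta>0 by (intro ge_one_powr_ge_zero) auto
        have Ky: "K = N * y" unfolding K_def y_def \<kappa>_def using N0 by (simp add: powr_add)
        have yK: "K\<^sup>2 / N\<^sup>2 = y\<^sup>2" unfolding Ky using N0 by (simp add: power_mult_distrib)
        have "exp (- K\<^sup>2 / (16 * N\<^sup>2)) = exp (- y\<^sup>2 / 16)" using yK by (simp add: field_simps)
        also have "\<dots> \<le> Ce * y powr (- m)" unfolding Ce_def by (rule exp_poly_bound[OF y1 m0])
        also have "y powr (- m) = N powr (2 * s * \<kappa>)"
          unfolding y_def m_def using \<delta>0 by (simp add: powr_powr)
        finally have b: "exp (- K\<^sup>2 / (16 * N\<^sup>2)) \<le> Ce * N powr (2 * s * \<kappa>)" .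
        show ?thesis unfolding a using b by (simp add: distrib_right)
      qed
      have Pb: "(K * N + norm k * N + N\<^sup>2) powr (2 * B) \<le> (2 + sqrt nr) powr (2 * B) * N powr (2 * B * (\<kappa> + 1))"
      proof -
        have "N\<^sup>2 \<le> K * N" using KN N0 by (simp add: power2_eq_square mult_right_mono)
        then have "K * N + norm k * N + N\<^sup>2 \<le> (2 + sqrt nr) * (K * N)" unfolding nk by (simp add: algebra_simps)
        then have "(K * N + norm k * N + N\<^sup>2) powr (2 * B) \<le> ((2 + sqrt nr) * (K * N)) powr (2 * B)"
          using N0 K0 unfolding B_def by (intro powr_mono2) (auto intro: add_nonneg_nonneg)
        also have "\<dots> = (2 + sqrt nr) powr (2 * B) * N powr (2 * B * (\<kappa> + 1))"
          unfolding KNp using N0 by (simp add: powr_mult powr_powr mult.commute)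
        finally show ?thesis .
      qed
      have "Q \<le> (((1 / 2) powr (2 * s) + Ce) * N powr (2 * s * \<kappa>)) * ((2 + sqrt nr) powr (2 * B) * N powr (2 * B * (\<kappa> + 1))) * E"
      proof -
        have "Q = (((K / 2) powr (2 * s) + exp (- K\<^sup>2 / (16 * N\<^sup>2))) * (K * N + norm k * N + N\<^sup>2) powr (2 * B)) * E"
          unfolding Q_def E_def by (simp add: mult_ac)
        also have "\<dots> \<le> (((1 / 2) powr (2 * s) + Ce) * N powr (2 * s * \<kappa>)) * ((2 + sqrt nr) powr (2 * B) * N powr (2 * B * (\<kappa> + 1))) * E"
        proof (rule mult_right_mono)
          have "0 \<le> ((1 / 2) powr (2 * s) + Ce) * N powr (2 * s * \<kappa>)" unfolding Ce_def by (intro mult_nonneg_nonneg add_nonneg_nonneg) auto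
          then show "((K / 2) powr (2 * s) + exp (- K\<^sup>2 / (16 * N\<^sup>2))) * (K * N + norm k * N + N\<^sup>2) powr (2 * B)
              \<le> (((1 / 2) powr (2 * s) + Ce) * N powr (2 * s * \<kappa>)) * ((2 + sqrt nr) powr (2 * B) * N powr (2 * B * (\<kappa> + 1)))"
            using S Pb by (intro mult_mono) auto
          show "0 \<le> E" unfolding E_def by simp
        qed
        finally show ?thesis .
      qed
      then have "Q / (N ^ n * (K * N)) \<le> (((1 / 2) powr (2 * s) + Ce) * N powr (2 * s * \<kappa>)) * ((2 + sqrt nr) powr (2 * B) * N powr (2 * B * (\<kappa> + 1))) * E / N powr (nr + \<kappa> + 1)"
        unfolding Nn by (rule divide_right_mono) simp
      also have "\<dots> = (((1 / 2) powr (2 * s) + Ce) * (2 + sqrt nr) powr (2 * B) * E) * N powr q"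
      proof -
        have "N powr (2 * s * \<kappa>) * N powr (2 * B * (\<kappa> + 1)) / N powr (nr + \<kappa> + 1) = N powr q"
          unfolding q_def by (simp add: powr_add[symmetric] powr_diff[symmetric] algebra_simps)
        moreover have "(((1 / 2) powr (2 * s) + Ce) * N powr (2 * s * \<kappa>)) * ((2 + sqrt nr) powr (2 * B) * N powr (2 * B * (\<kappa> + 1))) * E / N powr (nr + \<kappa> + 1)
            = (((1 / 2) powr (2 * s) + Ce) * (2 + sqrt nr) powr (2 * B) * E) * (N powr (2 * s * \<kappa>) * N powr (2 * B * (\<kappa> + 1)) / N powr (nr + \<kappa> + 1))"
          by (simp only: divide_inverse mult_ac)
        ultimately show ?thesis by simp
      qed
      finally have qq: "Q / (N ^ n * (K * N)) \<le> (((1 / 2) powr (2 * s) + Ce) * (2 + sqrt nr) powr (2 * B) * E) * N powr q" .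
      have "\<kappa>0 ^ (n + 1) * Q / (N ^ n * (K * N)) = \<kappa>0 ^ (n + 1) * (Q / (N ^ n * (K * N)))" by simp
      also have "\<dots> \<le> \<kappa>0 ^ (n + 1) * ((((1 / 2) powr (2 * s) + Ce) * (2 + sqrt nr) powr (2 * B) * E) * N powr q)"
        using qq unfolding \<kappa>0_def by (intro mult_left_mono) auto
      also have "\<dots> = D1 * N powr q" unfolding D1_def by (simp add: mult_ac)
      finally show ?thesis .
    qed
    finally have up: "Xsb_sq s b (gs (N\<^sup>2) ((K * N)\<^sup>2) k (- (norm k)\<^sup>2)) \<le> ennreal (D1 * N powr q)"
      using up0 by (meson ennreal_leI order_trans)
    define L where "L = ((1 + 2 * real CARD('n)) * K) powr (2 * s) * (cb (2 + 2 * (real CARD('n))\<^sup>2 + real CARD('n)) b * (K * N) powr (- 2 * b))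
           * exp (- real CARD('n) / 3) * exp (- 1 / 3)"
    have L0: "L \<ge> 0" unfolding L_def using cb_pos[OF P0, of b] unfolding P_def nr_def n_def by simp
    have lo0: "ennreal ((2 * pi / (3 * N\<^sup>2)) ^ CARD('n) * (2 * pi / (3 * (K * N)\<^sup>2)) * L * ((N / 2) ^ CARD('n) * ((K * N) / 2)))
        \<le> Xsb_sq s (- b) (gs (3 * N\<^sup>2) (3 * (K * N)\<^sup>2) k (- (norm k)\<^sup>2))"
      by (rule Xsb_lower) (use N0 in simp, use K0 N0 in simp, use N0 in simp, use K0 N0 in simp, use L0 in simp, unfold L_def, rule caseB2_low[OF N KN s0 hk nkle])
    have "(2 * pi / (3 * N\<^sup>2)) ^ CARD('n) * (2 * pi / (3 * (K * N)\<^sup>2)) * L * ((N / 2) ^ CARD('n) * ((K * N) / 2))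
        = (pi / 3) ^ (n + 1) * L / (N ^ n * (K * N))"
      unfolding n_def by (rule lower_const) (use N0 K0 in simp)+
    also have "\<dots> = A1 * N powr p"
    proof -
      have "K powr (2 * s) * (K * N) powr (- 2 * b) / (N ^ n * (K * N)) = N powr p"
      proof -
        have a: "(K * N) powr (- 2 * b) = N powr ((\<kappa> + 1) * (- 2 * b))" unfolding KNp by (simp add: powr_powr)
        have c: "K powr (2 * s) = N powr (\<kappa> * (2 * s))" by (rule Kp)
        have d: "N powr (\<kappa> * (2 * s)) * N powr ((\<kappa> + 1) * (- 2 * b)) / N powr (nr + \<kappa> + 1) = N powr p"
          unfolding p_def by (simp add: powr_add[symmetric] powr_diff[symmetric] algebra_simps)
        show ?thesis unfolding a c Nn d ..
      qed
      moreover have "(pi / 3) ^ (n + 1) * L / (N ^ n * (K * N))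
          = A1 * (K powr (2 * s) * (K * N) powr (- 2 * b) / (N ^ n * (K * N)))"
        unfolding L_def A1_def P_def nr_def n_def using K0 n1 by (simp add: powr_mult mult_ac)
      ultimately show ?thesis by simp
    qed
    finally have lo: "ennreal (A1 * N powr p) \<le> Xsb_sq s (- b) (gs (3 * N\<^sup>2) (3 * (K * N)\<^sup>2) k (- (norm k)\<^sup>2))" using lo0 by simp
    show "\<exists>a c (k::real^'n) w. a > 0 \<and> c > 0 \<and> Xsb_sq s b (gs a c k w) \<le> ennreal (D1 * N powr q)
              \<and> ennreal (A1 * N powr p) \<le> Xsb_sq s (-b) (gs (3 * a) (3 * c) k w)"
      using up lo N0 K0 by (intro exI[of _ "N\<^sup>2"] exI[of _ "(K * N)\<^sup>2"] exI[of _ k] exI[of _ "- (norm k)\<^sup>2"]) simp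
  qed
qed

theorem theorem1p5:
  fixes s b :: real
  assumes "CARD('n) \<ge> 2"
    and "s \<le> real CARD('n) / 2 - 1"
    and "b < 1/2"
  shows "\<not> (\<exists>C::real. \<forall>f g h :: (real^'n) \<times> real \<Rightarrow> complex.
            admissible s b f \<longrightarrow> admissible s b g \<longrightarrow> admissible s b h \<longrightarrow>
            Xsb_sq s (-b) (\<lambda>z. f z * cnj (g z) * h z)
              \<le> ennreal (C\<^sup>2) * Xsb_sq s b f * Xsb_sq s b g * Xsb_sq s b h)"
proof
  assume "\<exists>C::real. \<forall>f g h :: (real^'n) \<times> real \<Rightarrow> complex.
            admissible s b f \<longrightarrow> admissible s b g \<longrightarrow> admissible s b h \<longrightarrow>
            Xsb_sq s (-b) (\<lambda>z. f z * cnj (g z) * h z)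
              \<le> ennreal (C\<^sup>2) * Xsb_sq s b f * Xsb_sq s b g * Xsb_sq s b h"
  then obtain C :: real where H: "\<forall>f g h :: (real^'n) \<times> real \<Rightarrow> complex.
            admissible s b f \<longrightarrow> admissible s b g \<longrightarrow> admissible s b h \<longrightarrow>
            Xsb_sq s (-b) (\<lambda>z. f z * cnj (g z) * h z)
              \<le> ennreal (C\<^sup>2) * Xsb_sq s b f * Xsb_sq s b g * Xsb_sq s b h" by blast
  show False
  proof (cases "s \<ge> 0")
    case True
    show False by (rule caseA_final[OF True assms(2) assms(3) H])
  next
    case False
    then have "s \<le> 0" by simp
    show False by (rule caseB2_final[OF assms(1) \<open>s \<le> 0\<close> assms(3) H])
  qed
qed

end
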